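(* Let $G$ be a profinite group, $\{G_\alpha\}_{\alpha\le\mu}$ a composition series of $G$, $S$ a finite simple group, and $\mathcal S_1=\{\alpha<\mu: G_\alpha/G_{\alpha+1}\cong S\}$. For each finite topological quotient $A$ of $G$ let $n_{S,A}$ be the number of composition factors isomorphic to $S$ in a composition series of the finite group $A$. Then for every natural number $n$: $|\mathcal S_1|=n$ if and only if the set $\{n_{S,A} : A \text{ a finite topological quotient of } G\}$ has maximum equal to $n$.
   Context: All subgroups of profinite groups are closed and all quotients are topological quotients. An accessible series from $G$ to $\{e\}$ over an ordinal $\mu$ is a family of closed subgroups $G=G_0\ge\cdots\ge G_\lambda\ge\cdots\ge G_\mu=\{e\}$ with $G_{\alpha+1}\trianglelefteq G_\alpha$ for all $\alpha<\mu$ and $G_\alpha=\bigcap_{\beta<\alpha}G_\beta$ for all limit $\alpha\le\mu$. A composition series for $G$ is such a series with $G_\lambda/G_{\lambda+1}$ finite simple nontrivial for all $\lambda<\mu$. *)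

theory Defs
  imports "HOL-Analysis.Analysis" "HOL-Algebra.SimpleGroups" "HOL-Algebra.Coset"
begin

definition topological_group :: "'a monoid \<Rightarrow> 'a topology \<Rightarrow> bool" where
  "topological_group G T \<longleftrightarrow> group G \<and> topspace T = carrier G \<and>
     continuous_map (prod_topology T T) T (\<lambda>(x, y). x \<otimes>\<^bsub>G\<^esub> y) \<and>
     continuous_map T T (\<lambda>x. inv\<^bsub>G\<^esub> x)"

definition totally_disconnected_space :: "'a topology \<Rightarrow> bool" where
  "totally_disconnected_space T \<longleftrightarrow>
     (\<forall>S. S \<subseteq> topspace T \<and> connectedin T S \<longrightarrow> (\<exists>a. S \<subseteq> {a}))"

definition profinite_group :: "'a monoid \<Rightarrow> 'a topology \<Rightarrow> bool" where
  "profinite_group G T \<longleftrightarrow> topological_group G T \<and> compact_space T \<and>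
     Hausdorff_space T \<and> totally_disconnected_space T"

(* Ordinals up to mu are modelled by the initial segment {..mu} of a well-ordered type. *)
definition osucc :: "'i::wellorder \<Rightarrow> 'i" where
  "osucc \<alpha> = (LEAST \<beta>. \<alpha> < \<beta>)"

definition is_limit :: "'i::wellorder \<Rightarrow> bool" where
  "is_limit \<alpha> \<longleftrightarrow> (\<exists>\<beta>. \<beta> < \<alpha>) \<and> (\<forall>\<beta><\<alpha>. \<exists>\<gamma>. \<beta> < \<gamma> \<and> \<gamma> < \<alpha>)"

definition series_factor :: "'a monoid \<Rightarrow> ('i::wellorder \<Rightarrow> 'a set) \<Rightarrow> 'i \<Rightarrow> 'a set monoid" where
  "series_factor G Gs \<alpha> = (G\<lparr>carrier := Gs \<alpha>\<rparr>) Mod (Gs (osucc \<alpha>))"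

definition accessible_series ::
  "'a monoid \<Rightarrow> 'a topology \<Rightarrow> ('i::wellorder \<Rightarrow> 'a set) \<Rightarrow> 'i \<Rightarrow> bool" where
  "accessible_series G T Gs \<mu> \<longleftrightarrow>
     (\<forall>\<alpha>\<le>\<mu>. (\<forall>\<beta>. \<not> \<beta> < \<alpha>) \<longrightarrow> Gs \<alpha> = carrier G) \<and>
     Gs \<mu> = {\<one>\<^bsub>G\<^esub>} \<and>
     (\<forall>\<alpha>\<le>\<mu>. subgroup (Gs \<alpha>) G \<and> closedin T (Gs \<alpha>)) \<and>
     (\<forall>\<alpha> \<beta>. \<alpha> \<le> \<beta> \<and> \<beta> \<le> \<mu> \<longrightarrow> Gs \<beta> \<subseteq> Gs \<alpha>) \<and>
     (\<forall>\<alpha><\<mu>. Gs (osucc \<alpha>) \<lhd> (G\<lparr>carrier := Gs \<alpha>\<rparr>)) \<and>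
     (\<forall>\<alpha>\<le>\<mu>. is_limit \<alpha> \<longrightarrow> Gs \<alpha> = (\<Inter>\<beta>\<in>{..<\<alpha>}. Gs \<beta>))"

definition composition_series ::
  "'a monoid \<Rightarrow> 'a topology \<Rightarrow> ('i::wellorder \<Rightarrow> 'a set) \<Rightarrow> 'i \<Rightarrow> bool" where
  "composition_series G T Gs \<mu> \<longleftrightarrow> accessible_series G T Gs \<mu> \<and>
     (\<forall>\<alpha><\<mu>. finite (carrier (series_factor G Gs \<alpha>)) \<and> simple_group (series_factor G Gs \<alpha>))"

definition finite_composition_series :: "'x monoid \<Rightarrow> (nat \<Rightarrow> 'x set) \<Rightarrow> nat \<Rightarrow> bool" where
  "finite_composition_series A cs m \<longleftrightarrow>
     cs 0 = carrier A \<and> cs m = {\<one>\<^bsub>A\<^esub>} \<and>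
     (\<forall>i\<le>m. subgroup (cs i) A) \<and>
     (\<forall>i<m. cs (Suc i) \<lhd> (A\<lparr>carrier := cs i\<rparr>) \<and>
            simple_group ((A\<lparr>carrier := cs i\<rparr>) Mod (cs (Suc i))))"

(* k is the number of composition factors isomorphic to S in (some) composition series of A;
   by Jordan-Hoelder this does not depend on the series. *)
definition comp_factor_count :: "'x monoid \<Rightarrow> 's monoid \<Rightarrow> nat \<Rightarrow> bool" where
  "comp_factor_count A S k \<longleftrightarrow> (\<exists>cs m. finite_composition_series A cs m \<and>
     k = card {i. i < m \<and> ((A\<lparr>carrier := cs i\<rparr>) Mod (cs (Suc i))) \<cong> S})"

definition finite_quotient_counts :: "'a monoid \<Rightarrow> 'a topology \<Rightarrow> 's monoid \<Rightarrow> nat set" where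
  "finite_quotient_counts G T S = {k. \<exists>N. closedin T N \<and> N \<lhd> G \<and>
      finite (carrier (G Mod N)) \<and> comp_factor_count (G Mod N) S k}"

end

theory Submission
  imports Defs "HOL-Algebra.SndIsomorphismGrp"
begin

locale profin =
  fixes G :: "'a monoid" (structure) and T :: "'a topology"
  assumes pg: "profinite_group G T"
begin

lemma grp: "group G" using pg by (simp add: profinite_group_def topological_group_def)

sublocale group G by (rule grp)

lemma top: "topspace T = carrier G"
  using pg by (simp add: profinite_group_def topological_group_def)
lemma mult_cont: "continuous_map (prod_topology T T) T (\<lambda>(x, y). x \<otimes> y)"
  using pg by (simp add: profinite_group_def topological_group_def)
lemma inv_cont: "continuous_map T T (\<lambda>x. inv x)"
  using pg by (simp add: profinite_group_def topological_group_def)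
lemma cpt: "compact_space T" using pg by (simp add: profinite_group_def)
lemma haus: "Hausdorff_space T" using pg by (simp add: profinite_group_def)
lemma tdisc: "totally_disconnected_space T" using pg by (simp add: profinite_group_def)

lemma cancel1 [simp]: "g \<in> carrier G \<Longrightarrow> y \<in> carrier G \<Longrightarrow> inv g \<otimes> (g \<otimes> y) = y"
  by (simp add: m_assoc[symmetric])
lemma cancel2 [simp]: "g \<in> carrier G \<Longrightarrow> y \<in> carrier G \<Longrightarrow> g \<otimes> (inv g \<otimes> y) = y"
  by (simp add: m_assoc[symmetric])

lemma open_carrier: "openin T (carrier G)" by (metis openin_topspace top)
lemma closed_carrier: "closedin T (carrier G)" by (metis closedin_topspace top)

lemma rmul_cont:
  assumes "a \<in> carrier G" shows "continuous_map T T (\<lambda>x. x \<otimes> a)"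
proof -
  have "continuous_map T (prod_topology T T) (\<lambda>x. (x, a))"
    by (intro continuous_map_pairedI) (auto simp: top assms)
  from continuous_map_compose[OF this mult_cont] show ?thesis by (simp add: o_def)
qed

lemma lmul_cont:
  assumes "a \<in> carrier G" shows "continuous_map T T (\<lambda>x. a \<otimes> x)"
proof -
  have "continuous_map T (prod_topology T T) (\<lambda>x. (a, x))"
    by (intro continuous_map_pairedI) (auto simp: top assms)
  from continuous_map_compose[OF this mult_cont] show ?thesis by (simp add: o_def)
qed

lemma rcos_preimage:
  assumes "C \<subseteq> carrier G" "g \<in> carrier G"
  shows "C #> g = {x \<in> topspace T. x \<otimes> inv g \<in> C}"
proof
  show "C #> g \<subseteq> {x \<in> topspace T. x \<otimes> inv g \<in> C}"
    using assms by (auto simp: r_coset_def top m_assoc subsetD)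
  show "{x \<in> topspace T. x \<otimes> inv g \<in> C} \<subseteq> C #> g"
  proof clarify
    fix x assume x: "x \<in> topspace T" "x \<otimes> inv g \<in> C"
    then have "x = (x \<otimes> inv g) \<otimes> g" using assms by (simp add: top m_assoc)
    with x show "x \<in> C #> g" unfolding r_coset_def by blast
  qed
qed

lemma lcos_preimage:
  assumes "C \<subseteq> carrier G" "g \<in> carrier G"
  shows "g <# C = {x \<in> topspace T. inv g \<otimes> x \<in> C}"
proof
  show "g <# C \<subseteq> {x \<in> topspace T. inv g \<otimes> x \<in> C}"
    using assms by (auto simp: l_coset_def top m_assoc[symmetric] subsetD)
  show "{x \<in> topspace T. inv g \<otimes> x \<in> C} \<subseteq> g <# C"
  proof clarify
    fix x assume x: "x \<in> topspace T" "inv g \<otimes> x \<in> C"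
    then have "x = g \<otimes> (inv g \<otimes> x)" using assms by (simp add: top m_assoc[symmetric])
    with x show "x \<in> g <# C" unfolding l_coset_def by blast
  qed
qed

lemma closedin_rcos: "closedin T C \<Longrightarrow> g \<in> carrier G \<Longrightarrow> closedin T (C #> g)"
  using rcos_preimage[of C g] closedin_continuous_map_preimage[OF rmul_cont[of "inv g"]]
  by (metis closedin_subset inv_closed top)
lemma openin_rcos: "openin T C \<Longrightarrow> g \<in> carrier G \<Longrightarrow> openin T (C #> g)"
  using rcos_preimage[of C g] openin_continuous_map_preimage[OF rmul_cont[of "inv g"]]
  by (metis openin_subset inv_closed top)
lemma closedin_lcos: "closedin T C \<Longrightarrow> g \<in> carrier G \<Longrightarrow> closedin T (g <# C)"
  using lcos_preimage[of C g] closedin_continuous_map_preimage[OF lmul_cont[of "inv g"]]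
  by (metis closedin_subset inv_closed top)
lemma openin_lcos: "openin T C \<Longrightarrow> g \<in> carrier G \<Longrightarrow> openin T (g <# C)"
  using lcos_preimage[of C g] openin_continuous_map_preimage[OF lmul_cont[of "inv g"]]
  by (metis openin_subset inv_closed top)

lemma zero_dim:
  assumes x: "x \<in> carrier G" and y: "y \<in> carrier G" and xy: "x \<noteq> y"
  shows "\<exists>U. openin T U \<and> closedin T U \<and> x \<in> U \<and> y \<notin> U"
proof (rule ccontr)
  assume nex: "\<not> ?thesis"
  define \<C> where "\<C> = {U. openin T U \<and> closedin T U \<and> x \<in> U}"
  define Q where "Q = \<Inter>\<C>"
  have topC: "topspace T \<in> \<C>" using x unfolding \<C>_def top by (simp add: open_carrier closed_carrier)
  have Qsub: "Q \<subseteq> topspace T" using topC unfolding Q_def by blast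
  have xQ: "x \<in> Q" unfolding Q_def \<C>_def by blast
  have yQ: "y \<in> Q" using nex y unfolding Q_def \<C>_def by blast
  have Qcl: "closedin T Q" unfolding Q_def using topC by (intro closedin_Inter) (auto simp: \<C>_def)
  have "connectedin T Q"
    unfolding connectedin_closedin
  proof (intro conjI Qsub notI, elim exE conjE)
    fix E1 E2
    assume E1: "closedin T E1" and E2: "closedin T E2" and QE: "Q \<subseteq> E1 \<union> E2"
      and dis: "E1 \<inter> E2 \<inter> Q = {}" and ne1: "E1 \<inter> Q \<noteq> {}" and ne2: "E2 \<inter> Q \<noteq> {}"
    have gen: False if K1: "closedin T K1" and K2: "closedin T K2" and QK: "Q = K1 \<union> K2"
      and dK: "K1 \<inter> K2 = {}" and xK: "x \<in> K1" and nK2: "K2 \<noteq> {}" for K1 K2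
    proof -
      have "normal_space T" using cpt haus by (simp add: compact_Hausdorff_or_regular_imp_normal_space)
      then obtain V1 V2 where V1: "openin T V1" and V2: "openin T V2" and KV1: "K1 \<subseteq> V1"
        and KV2: "K2 \<subseteq> V2" and dV: "disjnt V1 V2"
        unfolding normal_space_def using K1 K2 dK by (metis disjnt_def)
      define \<U> where "\<U> = insert (topspace T - (V1 \<union> V2)) \<C>"
      have "\<Inter>\<U> = {}"
      proof (rule ccontr)
        assume "\<Inter>\<U> \<noteq> {}"
        then obtain y where y: "y \<in> \<Inter>\<U>" by blast
        then have "y \<in> topspace T - (V1 \<union> V2)" unfolding \<U>_def by blast
        moreover have "y \<in> Q" using y unfolding \<U>_def Q_def by blast
        ultimately show False using QK KV1 KV2 by blast
      qed
      moreover have "\<forall>C\<in>\<U>. closedin T C" using V1 V2 unfolding \<U>_def \<C>_def by auto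
      ultimately have "\<not> (\<forall>F. finite F \<and> F \<subseteq> \<U> \<longrightarrow> \<Inter>F \<noteq> {})"
        using cpt[unfolded compact_space_fip, rule_format, of \<U>] by blast
      then obtain F where F: "finite F" "F \<subseteq> \<U>" "\<Inter>F = {}" by blast
      define D where "D = \<Inter>(insert (topspace T) (F \<inter> \<C>))"
      have Dfin: "finite (insert (topspace T) (F \<inter> \<C>))" using F by auto
      have Dop: "openin T D" unfolding D_def
        by (rule openin_Inter[OF Dfin]) (auto simp: \<C>_def)
      have Dcl: "closedin T D" unfolding D_def
        by (rule closedin_Inter) (auto simp: \<C>_def)
      have xD: "x \<in> D" using x unfolding D_def \<C>_def by (auto simp: top)
      have Dtop: "D \<subseteq> topspace T" unfolding D_def by blast
      have "D \<inter> (topspace T - (V1 \<union> V2)) \<subseteq> \<Inter>F"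
      proof
        fix y assume y: "y \<in> D \<inter> (topspace T - (V1 \<union> V2))"
        { fix X assume X: "X \<in> F"
          then have "X = topspace T - (V1 \<union> V2) \<or> X \<in> F \<inter> \<C>" using F(2) unfolding \<U>_def by blast
          then have "y \<in> X" using y unfolding D_def by blast }
        then show "y \<in> \<Inter>F" by blast
      qed
      then have "D \<inter> (topspace T - (V1 \<union> V2)) = {}" using F(3) by blast
      then have DV: "D \<subseteq> V1 \<union> V2" using Dtop by blast
      have "D \<inter> V1 = D \<inter> (topspace T - V2)"
        using DV dV Dtop by (auto simp: disjnt_def)
      then have "closedin T (D \<inter> V1)" using Dcl V2 by (metis closedin_Int closedin_diff closedin_topspace)
      moreover have "openin T (D \<inter> V1)" using Dop V1 by blast
      ultimately have "D \<inter> V1 \<in> \<C>" using xD xK KV1 unfolding \<C>_def by blast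
      then have "Q \<subseteq> V1" unfolding Q_def by blast
      then show False using QK KV2 dV nK2 by (auto simp: disjnt_def)
    qed
    show False
    proof (cases "x \<in> E1")
      case True
      show False
        by (rule gen[of "E1 \<inter> Q" "E2 \<inter> Q"]) (use True xQ E1 E2 Qcl QE dis ne2 in auto)
    next
      case False
      then have "x \<in> E2" using xQ QE by blast
      show False
        by (rule gen[of "E2 \<inter> Q" "E1 \<inter> Q"]) (use \<open>x \<in> E2\<close> xQ E1 E2 Qcl QE dis ne1 in auto)
    qed
  qed
  then obtain a where "Q \<subseteq> {a}" using tdisc Qsub unfolding totally_disconnected_space_def by blast
  with xQ yQ xy show False by blast
qed

lemma clopen_sep:
  assumes C: "closedin T C" and one: "\<one> \<notin> C"
  shows "\<exists>U. openin T U \<and> closedin T U \<and> \<one> \<in> U \<and> U \<inter> C = {}"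
proof -
  have Csub: "C \<subseteq> carrier G" using C closedin_subset top by blast
  define W where "W c = (SOME U. openin T U \<and> closedin T U \<and> \<one> \<in> U \<and> c \<notin> U)" for c
  have W: "openin T (W c) \<and> closedin T (W c) \<and> \<one> \<in> W c \<and> c \<notin> W c" if "c \<in> C" for c
  proof -
    have "\<exists>U. openin T U \<and> closedin T U \<and> \<one> \<in> U \<and> c \<notin> U"
      using zero_dim[of \<one> c] that Csub one by auto
    then show ?thesis unfolding W_def by (rule someI_ex)
  qed
  have "compactin T C" using cpt C by (rule closedin_compact_space)
  moreover have "\<forall>U\<in>(\<lambda>c. topspace T - W c) ` C. openin T U" using W by auto
  moreover have "C \<subseteq> \<Union>((\<lambda>c. topspace T - W c) ` C)" using W Csub top by auto
  ultimately obtain F where F: "finite F" "F \<subseteq> (\<lambda>c. topspace T - W c) ` C" "C \<subseteq> \<Union>F"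
    unfolding compactin_def by metis
  then obtain C0 where C0: "C0 \<subseteq> C" "finite C0" "F = (\<lambda>c. topspace T - W c) ` C0"
    by (metis finite_subset_image)
  define U where "U = \<Inter>(insert (topspace T) (W ` C0))"
  have "openin T U" unfolding U_def using C0 W by (intro openin_Inter) auto
  moreover have "closedin T U" unfolding U_def using C0 W by (intro closedin_Inter) auto
  moreover have "\<one> \<in> U" unfolding U_def using C0 W top by auto
  moreover have "U \<inter> C = {}" using F C0 unfolding U_def by blast
  ultimately show ?thesis by blast
qed

lemma open_subgroup_in_clopen:
  assumes Uo: "openin T U" and Uc: "closedin T U" and one: "\<one> \<in> U"
  shows "\<exists>H. subgroup H G \<and> openin T H \<and> H \<subseteq> U"
proof -
  have Usub: "U \<subseteq> carrier G" using Uo openin_subset top by blast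
  define W where "W = {p \<in> topspace (prod_topology T T). (\<lambda>(x, y). x \<otimes> y) p \<in> U}"
  have Wo: "openin (prod_topology T T) W" unfolding W_def
    by (rule openin_continuous_map_preimage[OF mult_cont Uo])
  have "compactin T U" using cpt Uc by (rule closedin_compact_space)
  moreover have "U \<times> {\<one>} \<subseteq> W" using Usub one unfolding W_def by (auto simp: top)
  ultimately obtain U' V1 where V1: "openin T U'" "openin T V1" "U \<subseteq> U'" "\<one> \<in> V1" "U' \<times> V1 \<subseteq> W"
    using tube_lemma_left[OF Wo] by (metis one_closed top)
  have V1m: "u \<otimes> v \<in> U" if "u \<in> U" "v \<in> V1" for u v
  proof -
    have "(u, v) \<in> U' \<times> V1" using that V1(3) by blast
    then have "(u, v) \<in> W" using V1(5) by blast
    then show ?thesis by (simp add: W_def)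
  qed
  define V where "V = V1 \<inter> {v \<in> topspace T. inv v \<in> V1}"
  have Vo: "openin T V" unfolding V_def
    using V1(2) openin_continuous_map_preimage[OF inv_cont V1(2)] by blast
  have oneV: "\<one> \<in> V" using V1 by (simp add: V_def top)
  have Vsub: "V \<subseteq> carrier G" using Vo openin_subset top by blast
  have Vm: "u \<otimes> v \<in> U \<and> u \<otimes> inv v \<in> U" if "u \<in> U" "v \<in> V" for u v
    using that V1m unfolding V_def by auto
  define H where "H = {g \<in> carrier G. \<forall>u\<in>U. u \<otimes> g \<in> U \<and> u \<otimes> inv g \<in> U}"
  have sg: "subgroup H G"
  proof (rule subgroupI)
    show "H \<subseteq> carrier G" unfolding H_def by blast
    show "H \<noteq> {}" using Usub unfolding H_def by (auto intro!: exI[of _ \<one>])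
    show "inv a \<in> H" if "a \<in> H" for a using that Usub unfolding H_def by auto
    show "a \<otimes> b \<in> H" if "a \<in> H" "b \<in> H" for a b
    proof -
      have ab: "a \<in> carrier G" "b \<in> carrier G" using that unfolding H_def by auto
      { fix u assume u: "u \<in> U"
        then have uc: "u \<in> carrier G" using Usub by blast
        have "u \<otimes> (a \<otimes> b) = (u \<otimes> a) \<otimes> b" using uc ab by (simp add: m_assoc)
        moreover have "u \<otimes> a \<in> U" using u that(1) unfolding H_def by blast
        ultimately have 1: "u \<otimes> (a \<otimes> b) \<in> U" using that(2) unfolding H_def by auto
        have "u \<otimes> inv (a \<otimes> b) = (u \<otimes> inv b) \<otimes> inv a" using uc ab by (simp add: m_assoc inv_mult_group)
        moreover have "u \<otimes> inv b \<in> U" using u that(2) unfolding H_def by blast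
        ultimately have 2: "u \<otimes> inv (a \<otimes> b) \<in> U" using that(1) unfolding H_def by auto
        note 1 2 }
      then show ?thesis using ab unfolding H_def by auto
    qed
  qed
  have HU: "H \<subseteq> U"
  proof
    fix g assume "g \<in> H" then have "\<one> \<otimes> g \<in> U" "g \<in> carrier G" using one unfolding H_def by auto
    then show "g \<in> U" by simp
  qed
  have "openin T H"
    unfolding openin_subopen[of T H]
  proof
    fix h assume hH: "h \<in> H"
    then have hc: "h \<in> carrier G" unfolding H_def by blast
    have "h <# V \<subseteq> H"
    proof
      fix x assume "x \<in> h <# V"
      then obtain v where v: "v \<in> V" "x = h \<otimes> v" unfolding l_coset_def by blast
      have vc: "v \<in> carrier G" using v Vsub by blast
      { fix u assume u: "u \<in> U"
        then have uc: "u \<in> carrier G" using Usub by blast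
        have "u \<otimes> h \<in> U" using u hH unfolding H_def by blast
        then have "(u \<otimes> h) \<otimes> v \<in> U" using Vm v by blast
        then have 1: "u \<otimes> x \<in> U" using uc hc vc v by (simp add: m_assoc)
        have "u \<otimes> inv v \<in> U" using Vm u v by blast
        then have "(u \<otimes> inv v) \<otimes> inv h \<in> U" using hH unfolding H_def by blast
        then have 2: "u \<otimes> inv x \<in> U" using uc hc vc v by (simp add: m_assoc inv_mult_group)
        note 1 2 }
      then show "x \<in> H" using hc vc v unfolding H_def by auto
    qed
    moreover have "h \<in> h <# V" using oneV hc unfolding l_coset_def by (auto intro!: bexI[of _ \<one>])
    moreover have "openin T (h <# V)" using Vo hc by (rule openin_lcos)
    ultimately show "\<exists>T'. openin T T' \<and> h \<in> T' \<and> T' \<subseteq> H" by blast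
  qed
  with sg HU show ?thesis by blast
qed

lemma open_subgroup_finite_rcosets:
  assumes H: "subgroup H G" and Ho: "openin T H"
  shows "finite (rcosets H)"
proof -
  have "\<forall>U\<in>rcosets H. openin T U" using Ho openin_rcos unfolding RCOSETS_def by auto
  moreover have "topspace T \<subseteq> \<Union>(rcosets H)"
  proof
    fix x assume "x \<in> topspace T"
    then have x: "x \<in> carrier G" using top by simp
    then have "x \<in> H #> x" using H by (simp add: rcos_self)
    then show "x \<in> \<Union>(rcosets H)" using x unfolding RCOSETS_def by blast
  qed
  ultimately obtain F where F: "finite F" "F \<subseteq> rcosets H" "topspace T \<subseteq> \<Union>F"
    using cpt unfolding compact_space_alt by metis
  have "rcosets H \<subseteq> F"
  proof
    fix C assume "C \<in> rcosets H"
    then obtain g where g: "g \<in> carrier G" "C = H #> g" unfolding RCOSETS_def by blast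
    then obtain C' where C': "C' \<in> F" "g \<in> C'" using F top by blast
    then obtain g' where g': "g' \<in> carrier G" "C' = H #> g'" using F unfolding RCOSETS_def by blast
    have "H #> g' = H #> g" using repr_independence[OF _ g'(1) H] C' g' by simp
    then show "C \<in> F" using C' g' g by simp
  qed
  then show ?thesis using F finite_subset by blast
qed

lemma open_subgroup_closed:
  assumes H: "subgroup H G" and Ho: "openin T H"
  shows "closedin T H"
  unfolding closedin_def
proof
  show "H \<subseteq> topspace T" using Ho openin_subset by blast
  show "openin T (topspace T - H)"
    unfolding openin_subopen[of T "topspace T - H"]
  proof
    fix x assume x: "x \<in> topspace T - H"
    then have xc: "x \<in> carrier G" using top by simp
    have "H #> x \<subseteq> topspace T - H"
    proof
      fix y assume "y \<in> H #> x"
      then obtain h where h: "h \<in> H" "y = h \<otimes> x" unfolding r_coset_def by blast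
      have hc: "h \<in> carrier G" using subgroup.mem_carrier[OF H h(1)] .
      have "y \<notin> H"
      proof
        assume yH: "y \<in> H"
        have "inv h \<otimes> y = x" using h hc xc by (simp add: m_assoc[symmetric])
        moreover have "inv h \<otimes> y \<in> H" using yH h H by (simp add: subgroup.m_closed subgroup.m_inv_closed)
        ultimately show False using x by simp
      qed
      then show "y \<in> topspace T - H" using h hc xc top by simp
    qed
    moreover have "x \<in> H #> x" using H xc by (simp add: rcos_self)
    moreover have "openin T (H #> x)" using Ho xc by (rule openin_rcos)
    ultimately show "\<exists>T'. openin T T' \<and> x \<in> T' \<and> T' \<subseteq> topspace T - H" by blast
  qed
qed

lemma conj_cont:
  assumes "g \<in> carrier G" shows "continuous_map T T (\<lambda>x. g \<otimes> x \<otimes> inv g)"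
proof -
  have "continuous_map T T ((\<lambda>x. x \<otimes> inv g) \<circ> (\<lambda>x. g \<otimes> x))"
    using assms by (intro continuous_map_compose[OF lmul_cont rmul_cont]) auto
  then show ?thesis by (simp add: o_def)
qed

lemma open_normal_core:
  assumes H: "subgroup H G" and Ho: "openin T H"
  shows "\<exists>N. N \<lhd> G \<and> openin T N \<and> N \<subseteq> H"
proof -
  have Hc: "H \<subseteq> carrier G" using H subgroup.subset by blast
  define N where "N = {x \<in> carrier G. \<forall>g\<in>carrier G. g \<otimes> x \<otimes> inv g \<in> H}"
  have Nsg: "subgroup N G"
  proof (rule subgroupI)
    show "N \<subseteq> carrier G" unfolding N_def by blast
    show "N \<noteq> {}" using H unfolding N_def by (auto intro!: exI[of _ \<one>] simp: subgroup.one_closed)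
    show "inv a \<in> N" if a: "a \<in> N" for a
    proof -
      have ac: "a \<in> carrier G" using a unfolding N_def by blast
      { fix g assume g: "g \<in> carrier G"
        have "g \<otimes> inv a \<otimes> inv g = inv (g \<otimes> a \<otimes> inv g)" using g ac by (simp add: inv_mult_group m_assoc)
        moreover have "g \<otimes> a \<otimes> inv g \<in> H" using a g unfolding N_def by blast
        ultimately have "g \<otimes> inv a \<otimes> inv g \<in> H" using H by (simp add: subgroup.m_inv_closed) }
      then show ?thesis using ac unfolding N_def by blast
    qed
    show "a \<otimes> b \<in> N" if a: "a \<in> N" and b: "b \<in> N" for a b
    proof -
      have ac: "a \<in> carrier G" "b \<in> carrier G" using a b unfolding N_def by auto
      { fix g assume g: "g \<in> carrier G"
        have "g \<otimes> (a \<otimes> b) \<otimes> inv g = (g \<otimes> a \<otimes> inv g) \<otimes> (g \<otimes> b \<otimes> inv g)"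
          using g ac by (simp add: m_assoc)
        moreover have "g \<otimes> a \<otimes> inv g \<in> H" "g \<otimes> b \<otimes> inv g \<in> H" using a b g unfolding N_def by auto
        ultimately have "g \<otimes> (a \<otimes> b) \<otimes> inv g \<in> H" using H by (simp add: subgroup.m_closed) }
      then show ?thesis using ac unfolding N_def by blast
    qed
  qed
  have Nn: "N \<lhd> G"
    unfolding normal_inv_iff
  proof (intro conjI Nsg ballI)
    fix x h assume x: "x \<in> carrier G" and h: "h \<in> N"
    have hc: "h \<in> carrier G" using h unfolding N_def by blast
    { fix g assume g: "g \<in> carrier G"
      have "g \<otimes> (x \<otimes> h \<otimes> inv x) \<otimes> inv g = (g \<otimes> x) \<otimes> h \<otimes> inv (g \<otimes> x)"
        using g x hc by (simp add: m_assoc inv_mult_group)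
      moreover have "(g \<otimes> x) \<otimes> h \<otimes> inv (g \<otimes> x) \<in> H" using h g x unfolding N_def by blast
      ultimately have "g \<otimes> (x \<otimes> h \<otimes> inv x) \<otimes> inv g \<in> H" by simp }
    then show "x \<otimes> h \<otimes> inv x \<in> N" using x hc unfolding N_def by simp
  qed
  have NH: "N \<subseteq> H" unfolding N_def by (force dest: bspec[where x=\<one>])
  define P where "P g = {x \<in> topspace T. g \<otimes> x \<otimes> inv g \<in> H}" for g
  define Q where "Q C = {x \<in> topspace T. \<forall>g\<in>C. g \<otimes> x \<otimes> inv g \<in> H}" for C
  have PQ: "P g = Q (H #> g)" if g: "g \<in> carrier G" for g
  proof -
    have "g \<otimes> x \<otimes> inv g \<in> H \<longleftrightarrow> g' \<otimes> x \<otimes> inv g' \<in> H"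
      if x: "x \<in> carrier G" and g': "g' \<in> H #> g" for x g'
    proof -
      obtain h where h: "h \<in> H" "g' = h \<otimes> g" using g' unfolding r_coset_def by blast
      have hc: "h \<in> carrier G" using h Hc by blast
      have e: "g' \<otimes> x \<otimes> inv g' = h \<otimes> (g \<otimes> x \<otimes> inv g) \<otimes> inv h"
        using h hc g x by (simp add: m_assoc inv_mult_group)
      show ?thesis
      proof
        assume "g \<otimes> x \<otimes> inv g \<in> H" then show "g' \<otimes> x \<otimes> inv g' \<in> H"
          unfolding e using h H by (simp add: subgroup.m_closed subgroup.m_inv_closed)
      next
        assume a: "g' \<otimes> x \<otimes> inv g' \<in> H"
        have "g \<otimes> x \<otimes> inv g = inv h \<otimes> (g' \<otimes> x \<otimes> inv g') \<otimes> h"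
          unfolding e using h hc g x by (simp add: m_assoc)
        then show "g \<otimes> x \<otimes> inv g \<in> H" using a h H by (simp add: subgroup.m_closed subgroup.m_inv_closed)
      qed
    qed
    moreover have "g \<in> H #> g" using H g by (simp add: rcos_self)
    ultimately show ?thesis unfolding P_def Q_def using top by blast
  qed
  have "P ` carrier G \<subseteq> Q ` (rcosets H)" using PQ unfolding RCOSETS_def by blast
  then have finP: "finite (P ` carrier G)"
    using open_subgroup_finite_rcosets[OF H Ho] finite_subset by blast
  have Neq: "N = \<Inter>(insert (topspace T) (P ` carrier G))"
    unfolding N_def P_def using top by auto
  have "openin T N" unfolding Neq
  proof (rule openin_Inter)
    show "finite (insert (topspace T) (P ` carrier G))" using finP by simp
    show "\<And>X. X \<in> insert (topspace T) (P ` carrier G) \<Longrightarrow> openin T X"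
      unfolding P_def using openin_continuous_map_preimage[OF conj_cont Ho] by auto
  qed auto
  with Nn NH show ?thesis by blast
qed

lemma avoid_closed:
  assumes C: "closedin T C" and one: "\<one> \<notin> C"
  shows "\<exists>N. N \<lhd> G \<and> closedin T N \<and> finite (carrier (G Mod N)) \<and> N \<inter> C = {}"
proof -
  obtain U where U: "openin T U" "closedin T U" "\<one> \<in> U" "U \<inter> C = {}"
    using clopen_sep[OF C one] by blast
  obtain H where H: "subgroup H G" "openin T H" "H \<subseteq> U" using open_subgroup_in_clopen[OF U(1-3)] by blast
  obtain N where N: "N \<lhd> G" "openin T N" "N \<subseteq> H" using open_normal_core[OF H(1,2)] by blast
  have "closedin T N" using open_subgroup_closed N normal_imp_subgroup by blast
  moreover have "finite (carrier (G Mod N))"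
    using open_subgroup_finite_rcosets[OF normal_imp_subgroup[OF N(1)] N(2)] by (simp add: FactGroup_def)
  ultimately show ?thesis using N H U by blast
qed

end

definition cnt :: "'x monoid \<Rightarrow> (nat \<Rightarrow> 'x set) \<Rightarrow> nat \<Rightarrow> 's monoid \<Rightarrow> nat" where
  "cnt A cs m S = card {i. i < m \<and> ((A\<lparr>carrier := cs i\<rparr>) Mod (cs (Suc i))) \<cong> S}"

lemma card_Suc_split:
  "card {i. i < Suc k \<and> P i} = (if P 0 then 1 else 0) + card {i. i < k \<and> P (Suc i)}"
proof -
  have e: "{i. i < Suc k \<and> P i} = (if P 0 then {0} else {}) \<union> Suc ` {i. i < k \<and> P (Suc i)}"
    by (auto simp: less_Suc_eq_0_disj)
  have "card ((if P 0 then {0} else {}) \<union> Suc ` {i. i < k \<and> P (Suc i)}) =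
        card (if P 0 then {0::nat} else {}) + card (Suc ` {i. i < k \<and> P (Suc i)})"
    by (rule card_Un_disjoint) auto
  also have "card (Suc ` {i. i < k \<and> P (Suc i)}) = card {i. i < k \<and> P (Suc i)}"
    by (rule card_image) simp
  finally show ?thesis unfolding e by simp
qed

lemma iso_cong_S:
  assumes "group X" "group Y" "X \<cong> Y"
  shows "(X \<cong> S) \<longleftrightarrow> (Y \<cong> S)"
  using assms iso_trans group.iso_sym by metis

lemma simple_iso:
  assumes "simple_group X" "group Y" "X \<cong> Y"
  shows "simple_group Y"
  using assms simple_group.iso_simple unfolding is_iso_def by blast

lemma (in group) subgroup_trans:
  assumes "subgroup I (G\<lparr>carrier := J\<rparr>)" "subgroup J G"
  shows "subgroup I G"
proof -
  have IJ: "I \<subseteq> J" using assms(1) subgroup.subset by fastforce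
  show ?thesis
  proof
    show "I \<subseteq> carrier G" using IJ assms(2) subgroup.subset by blast
    show "x \<otimes>\<^bsub>G\<^esub> y \<in> I" if "x \<in> I" "y \<in> I" for x y
      using subgroup.m_closed[OF assms(1) that] by simp
    show "\<one>\<^bsub>G\<^esub> \<in> I" using subgroup.one_closed[OF assms(1)] by simp
    show "inv\<^bsub>G\<^esub> x \<in> I" if "x \<in> I" for x
    proof -
      have "x \<in> J" using that IJ by blast
      then have "inv\<^bsub>G\<lparr>carrier := J\<rparr>\<^esub> x = inv\<^bsub>G\<^esub> x" using assms(2) by simp
      then show ?thesis using subgroup.m_inv_closed[OF assms(1) that] by simp
    qed
  qed
qed

lemma (in group) simple_quot_proper:
  assumes "subgroup H G" "simple_group (G Mod H)"
  shows "H \<noteq> carrier G"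
proof
  assume HG: "H = carrier G"
  have "carrier (G Mod H) = {H}"
    unfolding FactGroup_def RCOSETS_def using HG subgroup.rcos_const[OF assms(1) is_group] by auto
  then have "order (G Mod H) = 1" by (simp add: order_def)
  then show False using simple_group.order_gt_one[OF assms(2)] by simp
qed

lemma (in group) simple_quot_max:
  assumes H: "H \<lhd> G" and M: "M \<lhd> G" and HM: "H \<subseteq> M" and sim: "simple_group (G Mod H)"
  shows "M = H \<or> M = carrier G"
proof -
  have Hs: "subgroup H G" and Ms: "subgroup M G" using H M normal_imp_subgroup by auto
  have "rcosets\<^bsub>G\<lparr>carrier := M\<rparr>\<^esub> H \<lhd> G Mod H"
    by (rule normality_factorization[OF H HM M])
  then have "rcosets\<^bsub>G\<lparr>carrier := M\<rparr>\<^esub> H = carrier (G Mod H) \<or> rcosets\<^bsub>G\<lparr>carrier := M\<rparr>\<^esub> H = {\<one>\<^bsub>G Mod H\<^esub>}"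
    using simple_group.no_real_normal_subgroup[OF sim] by blast
  then show ?thesis
  proof
    assume e: "rcosets\<^bsub>G\<lparr>carrier := M\<rparr>\<^esub> H = carrier (G Mod H)"
    have "carrier G \<subseteq> M"
    proof
      fix g assume g: "g \<in> carrier G"
      then have "H #> g \<in> carrier (G Mod H)" unfolding FactGroup_def RCOSETS_def by auto
      then obtain m where m: "m \<in> M" "H #> g = H #> m" using e unfolding RCOSETS_def by auto
      have "g \<in> H #> g" using Hs g by (simp add: rcos_self)
      then obtain h where h: "h \<in> H" "g = h \<otimes> m" using m unfolding r_coset_def by auto
      have hM: "h \<in> M" using HM h(1) by blast
      show "g \<in> M" using subgroup.m_closed[OF Ms hM m(1)] h(2) by simp
    qed
    then show ?thesis using Ms subgroup.subset by blast
  next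
    assume e: "rcosets\<^bsub>G\<lparr>carrier := M\<rparr>\<^esub> H = {\<one>\<^bsub>G Mod H\<^esub>}"
    have "M \<subseteq> H"
    proof
      fix m assume m: "m \<in> M"
      then have mc: "m \<in> carrier G" using Ms subgroup.subset by blast
      have "H #> m = H" using e m unfolding RCOSETS_def by auto
      moreover have "m \<in> H #> m" using Hs mc by (simp add: rcos_self)
      ultimately show "m \<in> H" by simp
    qed
    then show ?thesis using HM by blast
  qed
qed

lemma fcs_dec:
  assumes "finite_composition_series A cs m" "i \<le> j" "j \<le> m"
  shows "cs j \<subseteq> cs i"
  using assms(2,3)
proof (induction j)
  case 0 then show ?case by simp
next
  case (Suc j)
  show ?case
  proof (cases "i = Suc j")
    case True then show ?thesis by simp
  next
    case False
    then have "i \<le> j" using Suc by simp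
    have "cs (Suc j) \<lhd> A\<lparr>carrier := cs j\<rparr>" using assms(1) Suc unfolding finite_composition_series_def by simp
    then have "cs (Suc j) \<subseteq> cs j" using normal_imp_subgroup subgroup.subset by fastforce
    then show ?thesis using Suc \<open>i \<le> j\<close> by simp
  qed
qed

lemma fcs_tail:
  assumes A: "group A" and f: "finite_composition_series A cs (Suc k)"
  shows "finite_composition_series (A\<lparr>carrier := cs 1\<rparr>) (\<lambda>i. cs (Suc i)) k"
    and "cnt A cs (Suc k) S = (if (A Mod cs 1) \<cong> S then 1 else 0) + cnt (A\<lparr>carrier := cs 1\<rparr>) (\<lambda>i. cs (Suc i)) k S"
proof -
  interpret group A by (rule A)
  have sub: "subgroup (cs i) A" if "i \<le> Suc k" for i using f that unfolding finite_composition_series_def by blast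
  show "finite_composition_series (A\<lparr>carrier := cs 1\<rparr>) (\<lambda>i. cs (Suc i)) k"
    unfolding finite_composition_series_def
  proof (intro conjI allI impI)
    show "cs (Suc 0) = carrier (A\<lparr>carrier := cs 1\<rparr>)" by simp
    show "cs (Suc k) = {\<one>\<^bsub>A\<lparr>carrier := cs 1\<rparr>\<^esub>}" using f unfolding finite_composition_series_def by simp
    show "subgroup (cs (Suc i)) (A\<lparr>carrier := cs 1\<rparr>)" if "i \<le> k" for i
      using subgroup_incl[OF sub[of "Suc i"] sub[of 1] fcs_dec[OF f, of 1 "Suc i"]] that by simp
    show "cs (Suc (Suc i)) \<lhd> A\<lparr>carrier := cs 1\<rparr>\<lparr>carrier := cs (Suc i)\<rparr>" if "i < k" for i
      using f that unfolding finite_composition_series_def by simp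
    show "simple_group (A\<lparr>carrier := cs 1\<rparr>\<lparr>carrier := cs (Suc i)\<rparr> Mod cs (Suc (Suc i)))" if "i < k" for i
      using f that unfolding finite_composition_series_def by simp
  qed
  have c0: "cs 0 = carrier A" using f unfolding finite_composition_series_def by simp
  show "cnt A cs (Suc k) S = (if (A Mod cs 1) \<cong> S then 1 else 0) + cnt (A\<lparr>carrier := cs 1\<rparr>) (\<lambda>i. cs (Suc i)) k S"
    unfolding cnt_def card_Suc_split using c0 by simp
qed

lemma fcs_cons:
  assumes A: "group A" and H: "H \<lhd> A" and sim: "simple_group (A Mod H)"
    and f: "finite_composition_series (A\<lparr>carrier := H\<rparr>) cs k"
  shows "finite_composition_series A (\<lambda>i. if i = 0 then carrier A else cs (i - 1)) (Suc k)"
    and "cnt A (\<lambda>i. if i = 0 then carrier A else cs (i - 1)) (Suc k) S = (if (A Mod H) \<cong> S then 1 else 0) + cnt (A\<lparr>carrier := H\<rparr>) cs k S"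
proof -
  interpret group A by (rule A)
  have Hs: "subgroup H A" using H normal_imp_subgroup by blast
  have c0: "cs 0 = H" using f unfolding finite_composition_series_def by simp
  show "finite_composition_series A (\<lambda>i. if i = 0 then carrier A else cs (i - 1)) (Suc k)"
    unfolding finite_composition_series_def
  proof (intro conjI allI impI)
    show "(if 0 = 0 then carrier A else cs (0 - 1)) = carrier A" by simp
    show "(if Suc k = 0 then carrier A else cs (Suc k - 1)) = {\<one>\<^bsub>A\<^esub>}"
      using f unfolding finite_composition_series_def by simp
    show "subgroup (if i = 0 then carrier A else cs (i - 1)) A" if "i \<le> Suc k" for i
    proof (cases "i = 0")
      case True then show ?thesis by (simp add: subgroup_self)
    next
      case False
      have "subgroup (cs (i - 1)) (A\<lparr>carrier := H\<rparr>)" using f that False unfolding finite_composition_series_def by simp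
      then show ?thesis using False subgroup_trans[OF _ Hs] by simp
    qed
    show "(if Suc i = 0 then carrier A else cs (Suc i - 1)) \<lhd> A\<lparr>carrier := if i = 0 then carrier A else cs (i - 1)\<rparr>"
      if "i < Suc k" for i
    proof (cases "i = 0")
      case True then show ?thesis using H c0 by simp
    next
      case False
      then obtain j where j: "i = Suc j" by (cases i) auto
      then show ?thesis using f that unfolding finite_composition_series_def by simp
    qed
    show "simple_group (A\<lparr>carrier := if i = 0 then carrier A else cs (i - 1)\<rparr> Mod (if Suc i = 0 then carrier A else cs (Suc i - 1)))"
      if "i < Suc k" for i
    proof (cases "i = 0")
      case True then show ?thesis using sim c0 by simp
    next
      case False
      then obtain j where j: "i = Suc j" by (cases i) auto
      then show ?thesis using f that unfolding finite_composition_series_def by simp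
    qed
  qed
  show "cnt A (\<lambda>i. if i = 0 then carrier A else cs (i - 1)) (Suc k) S = (if (A Mod H) \<cong> S then 1 else 0) + cnt (A\<lparr>carrier := H\<rparr>) cs k S"
    unfolding cnt_def card_Suc_split using c0 by simp
qed

lemma fcs_exists:
  assumes "group A" "finite (carrier A)"
  shows "\<exists>cs m. finite_composition_series A cs m"
  using assms
proof (induction "card (carrier A)" arbitrary: A rule: less_induct)
  case less
  interpret group A by (rule less.prems(1))
  show ?case
  proof (cases "carrier A = {\<one>\<^bsub>A\<^esub>}")
    case True
    have "finite_composition_series A (\<lambda>_. carrier A) 0"
      unfolding finite_composition_series_def using True subgroup_self by simp
    then show ?thesis by blast
  next
    case False
    define \<N> where "\<N> = {N. N \<lhd> A \<and> N \<noteq> carrier A}"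
    have oneN: "{\<one>\<^bsub>A\<^esub>} \<in> \<N>" unfolding \<N>_def using False one_is_normal by blast
    have finN: "finite \<N>"
    proof -
      have "\<N> \<subseteq> Pow (carrier A)" unfolding \<N>_def using normal_imp_subgroup subgroup.subset by blast
      then show ?thesis using less.prems(2) finite_subset by blast
    qed
    obtain H where H: "H \<in> \<N>" and Hmax: "\<forall>N\<in>\<N>. card N \<le> card H"
    proof -
      have "Max (card ` \<N>) \<in> card ` \<N>" using finN oneN by (intro Max_in) auto
      then obtain H where "H \<in> \<N>" "card H = Max (card ` \<N>)" by auto
      moreover have "\<forall>N\<in>\<N>. card N \<le> Max (card ` \<N>)" using finN by auto
      ultimately show ?thesis using that by metis
    qed
    have Hn: "H \<lhd> A" and Hne: "H \<noteq> carrier A" using H unfolding \<N>_def by auto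
    have Hs: "subgroup H A" using Hn normal_imp_subgroup by blast
    have Hsub: "H \<subseteq> carrier A" using Hs subgroup.subset by blast
    interpret N: normal H A by (rule Hn)
    have QG: "group (A Mod H)" by (rule N.factorgroup_is_group)
    have sim: "simple_group (A Mod H)"
    proof (rule simple_group.intro[OF QG], unfold_locales)
      have fin: "finite (carrier (A Mod H))"
        using less.prems(2) rcosets_subset_PowG[OF Hs] finite_subset by (simp add: FactGroup_def) blast
      have ne: "carrier (A Mod H) \<noteq> {\<one>\<^bsub>A Mod H\<^esub>}"
        using N.fact_group_trivial_iff[OF less.prems(2)] Hne by simp
      have "\<one>\<^bsub>A Mod H\<^esub> \<in> carrier (A Mod H)" using group.is_monoid[OF QG] monoid.one_closed by blast
      then have "card (carrier (A Mod H)) \<noteq> 1" using ne by (metis card_1_singletonE singletonD)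
      moreover have "card (carrier (A Mod H)) \<noteq> 0"
        using fin \<open>\<one>\<^bsub>A Mod H\<^esub> \<in> carrier (A Mod H)\<close> by auto
      ultimately show "1 < order (A Mod H)" unfolding order_def by linarith
    next
      fix M assume M: "M \<lhd> A Mod H"
      have UM: "\<Union>M \<lhd> A" by (rule N.factgroup_subgroup_union_normal[OF M])
      have Ms: "subgroup M (A Mod H)" using M normal_imp_subgroup by blast
      have HUM: "H \<subseteq> \<Union>M" using subgroup.one_closed[OF Ms] by auto
      have Meq: "M = rcosets\<^bsub>A\<lparr>carrier := \<Union>M\<rparr>\<^esub> H" by (rule N.factgroup_subgroup_union_factor[OF Ms])
      show "M = carrier (A Mod H) \<or> M = {\<one>\<^bsub>A Mod H\<^esub>}"
      proof (cases "\<Union>M = carrier A")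
        case True
        then have "M = rcosets\<^bsub>A\<^esub> H" using Meq by simp
        then show ?thesis by (simp add: FactGroup_def)
      next
        case False
        then have "\<Union>M \<in> \<N>" using UM unfolding \<N>_def by blast
        then have "card (\<Union>M) \<le> card H" using Hmax by blast
        moreover have "finite (\<Union>M)" using UM normal_imp_subgroup subgroup.subset less.prems(2) finite_subset by metis
        ultimately have "\<Union>M = H" using HUM card_seteq by blast
        then have "M = rcosets\<^bsub>A\<lparr>carrier := H\<rparr>\<^esub> H" using Meq by simp
        also have "\<dots> = {H}"
        proof -
          have "\<one>\<^bsub>A\<^esub> \<in> H" using subgroup.one_closed[OF Hs] .
          then have "H \<noteq> {}" by blast
          then show ?thesis unfolding RCOSETS_def using N.rcos_const[OF is_group] by auto
        qed
        finally show ?thesis by simp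
      qed
    qed
    have "card H < card (carrier A)" using Hsub Hne less.prems(2) by (meson psubsetI psubset_card_mono)
    moreover have "group (A\<lparr>carrier := H\<rparr>)" using Hs by (rule subgroup_imp_group)
    moreover have "finite (carrier (A\<lparr>carrier := H\<rparr>))" using Hsub less.prems(2) finite_subset by auto
    ultimately obtain cs m where "finite_composition_series (A\<lparr>carrier := H\<rparr>) cs m"
      using less.hyps by fastforce
    from fcs_cons(1)[OF less.prems(1) Hn sim this] show ?thesis by blast
  qed
qed

lemma fcs_zero:
  assumes A: "group A" and f: "finite_composition_series A cs m"
  shows "m = 0 \<longleftrightarrow> carrier A = {\<one>\<^bsub>A\<^esub>}"
proof
  assume "m = 0" then show "carrier A = {\<one>\<^bsub>A\<^esub>}" using f unfolding finite_composition_series_def by auto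
next
  assume triv: "carrier A = {\<one>\<^bsub>A\<^esub>}"
  show "m = 0"
  proof (rule ccontr)
    assume "m \<noteq> 0"
    then have m0: "0 < m" by simp
    interpret group A by (rule A)
    have c0: "cs 0 = carrier A" using f unfolding finite_composition_series_def by simp
    have n: "cs 1 \<lhd> A" and sim: "simple_group (A Mod cs 1)"
      using f m0 c0 unfolding finite_composition_series_def by auto
    have "subgroup (cs 1) A" using n normal_imp_subgroup by blast
    then have "cs 1 = carrier A" using triv subgroup.one_closed subgroup.subset by fastforce
    then show False using simple_quot_proper[OF normal_imp_subgroup[OF n] sim] by simp
  qed
qed

lemma fcs_head:
  assumes A: "group A" and f: "finite_composition_series A cs (Suc k)"
  shows "cs 1 \<lhd> A" "simple_group (A Mod cs 1)" "cs 1 \<noteq> carrier A"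
proof -
  interpret group A by (rule A)
  have c0: "cs 0 = carrier A" using f unfolding finite_composition_series_def by simp
  show n: "cs 1 \<lhd> A" and sim: "simple_group (A Mod cs 1)"
      using f c0 unfolding finite_composition_series_def by auto
  show "cs 1 \<noteq> carrier A" using simple_quot_proper[OF normal_imp_subgroup[OF n] sim] .
qed

lemma jh:
  assumes "group A" "finite (carrier A)" "finite_composition_series A cs m" "finite_composition_series A cs' m'"
  shows "cnt A cs m S = cnt A cs' m' S"
  using assms
proof (induction "card (carrier A)" arbitrary: A cs m cs' m' rule: less_induct)
  case less
  interpret group A by (rule less.prems(1))
  note f = less.prems(3) and f' = less.prems(4)
  show ?case
  proof (cases "carrier A = {\<one>\<^bsub>A\<^esub>}")
    case True
    then have "m = 0" "m' = 0" using fcs_zero[OF less.prems(1) f] fcs_zero[OF less.prems(1) f'] by auto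
    then show ?thesis unfolding cnt_def by simp
  next
    case False
    then obtain k k' where mk: "m = Suc k" and mk': "m' = Suc k'"
      using fcs_zero[OF less.prems(1) f] fcs_zero[OF less.prems(1) f'] by (cases m; cases m') auto
    define H1 where "H1 = cs 1"
    define H2 where "H2 = cs' 1"
    have f1: "finite_composition_series A cs (Suc k)" using f mk by simp
    have f2: "finite_composition_series A cs' (Suc k')" using f' mk' by simp
    have H1n: "H1 \<lhd> A" and sim1: "simple_group (A Mod H1)" and H1ne: "H1 \<noteq> carrier A"
      using fcs_head[OF less.prems(1) f1] unfolding H1_def by auto
    have H2n: "H2 \<lhd> A" and sim2: "simple_group (A Mod H2)" and H2ne: "H2 \<noteq> carrier A"
      using fcs_head[OF less.prems(1) f2] unfolding H2_def by auto
    have H1s: "subgroup H1 A" and H2s: "subgroup H2 A" using H1n H2n normal_imp_subgroup by auto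
    have H1sub: "H1 \<subseteq> carrier A" and H2sub: "H2 \<subseteq> carrier A" using H1s H2s subgroup.subset by auto
    have t1: "finite_composition_series (A\<lparr>carrier := H1\<rparr>) (\<lambda>i. cs (Suc i)) k"
      and c1: "cnt A cs (Suc k) S = (if (A Mod H1) \<cong> S then 1 else 0) + cnt (A\<lparr>carrier := H1\<rparr>) (\<lambda>i. cs (Suc i)) k S"
      using fcs_tail(1)[OF less.prems(1) f1] fcs_tail(2)[OF less.prems(1) f1, of S] unfolding H1_def by auto
    have t2: "finite_composition_series (A\<lparr>carrier := H2\<rparr>) (\<lambda>i. cs' (Suc i)) k'"
      and c2: "cnt A cs' (Suc k') S = (if (A Mod H2) \<cong> S then 1 else 0) + cnt (A\<lparr>carrier := H2\<rparr>) (\<lambda>i. cs' (Suc i)) k' S"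
      using fcs_tail(1)[OF less.prems(1) f2] fcs_tail(2)[OF less.prems(1) f2, of S] unfolding H2_def by auto
    have lt1: "card (carrier (A\<lparr>carrier := H1\<rparr>)) < card (carrier A)"
      using H1sub H1ne less.prems(2) by simp (meson psubsetI psubset_card_mono)
    have lt2: "card (carrier (A\<lparr>carrier := H2\<rparr>)) < card (carrier A)"
      using H2sub H2ne less.prems(2) by simp (meson psubsetI psubset_card_mono)
    have g1: "group (A\<lparr>carrier := H1\<rparr>)" and g2: "group (A\<lparr>carrier := H2\<rparr>)"
      using H1s H2s subgroup_imp_group by auto
    have fin1: "finite (carrier (A\<lparr>carrier := H1\<rparr>))" and fin2: "finite (carrier (A\<lparr>carrier := H2\<rparr>))"
      using H1sub H2sub less.prems(2) finite_subset by auto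
    show ?thesis
    proof (cases "H1 = H2")
      case True
      have "cnt (A\<lparr>carrier := H1\<rparr>) (\<lambda>i. cs (Suc i)) k S = cnt (A\<lparr>carrier := H1\<rparr>) (\<lambda>i. cs' (Suc i)) k' S"
        using less.hyps[OF lt1 g1 fin1 t1] t2 True by simp
      then show ?thesis using c1 c2 mk mk' True by simp
    next
      case False
      interpret s12: second_isomorphism_grp H1 A H2
        unfolding second_isomorphism_grp_def second_isomorphism_grp_axioms_def using H1n H2s by simp
      interpret s21: second_isomorphism_grp H2 A H1
        unfolding second_isomorphism_grp_def second_isomorphism_grp_axioms_def using H2n H1s by simp
      have Pn: "H1 <#>\<^bsub>A\<^esub> H2 \<lhd> A" by (rule normal_subgroup_set_mult_closed[OF H1n H2n])
      have "H1 <#>\<^bsub>A\<^esub> H2 = H1 \<or> H1 <#>\<^bsub>A\<^esub> H2 = carrier A"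
        by (rule simple_quot_max[OF H1n Pn s12.H_contained_in_set_mult sim1])
      moreover have "H1 <#>\<^bsub>A\<^esub> H2 \<noteq> H1"
      proof
        assume "H1 <#>\<^bsub>A\<^esub> H2 = H1"
        then have "H2 \<subseteq> H1" using s12.S_contained_in_set_mult by simp
        then have "H1 = H2 \<or> H1 = carrier A" by (rule simple_quot_max[OF H2n H1n _ sim2])
        then show False using False H1ne by blast
      qed
      ultimately have P: "H1 <#>\<^bsub>A\<^esub> H2 = carrier A" by blast
      have P': "H2 <#>\<^bsub>A\<^esub> H1 = carrier A"
      proof -
        have "H2 <#>\<^bsub>A\<^esub> H1 = H2 \<or> H2 <#>\<^bsub>A\<^esub> H1 = carrier A"
          by (rule simple_quot_max[OF H2n normal_subgroup_set_mult_closed[OF H2n H1n] s21.H_contained_in_set_mult sim2])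
        moreover have "H2 <#>\<^bsub>A\<^esub> H1 \<noteq> H2"
        proof
          assume "H2 <#>\<^bsub>A\<^esub> H1 = H2"
          then have "H1 \<subseteq> H2" using s21.S_contained_in_set_mult by simp
          then have "H2 = H1 \<or> H2 = carrier A" by (rule simple_quot_max[OF H1n H2n _ sim1])
          then show False using False H2ne by blast
        qed
        ultimately show ?thesis by blast
      qed
      define K where "K = H1 \<inter> H2"
      have iso1: "(A\<lparr>carrier := H2\<rparr>) Mod K \<cong> A Mod H1"
        using s12.normal_intersection_quotient_isom P unfolding is_iso_def K_def by auto
      have iso2: "(A\<lparr>carrier := H1\<rparr>) Mod K \<cong> A Mod H2"
        using s21.normal_intersection_quotient_isom P' unfolding is_iso_def K_def by (auto simp: Int_commute)
      have KN2: "K \<lhd> A\<lparr>carrier := H2\<rparr>" using s12.normal_subgrp_intersection_normal unfolding K_def by (simp add: Int_commute)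
      have KN1: "K \<lhd> A\<lparr>carrier := H1\<rparr>" using s21.normal_subgrp_intersection_normal unfolding K_def by simp
      have QG1: "group ((A\<lparr>carrier := H1\<rparr>) Mod K)" using KN1 normal.factorgroup_is_group by blast
      have QG2: "group ((A\<lparr>carrier := H2\<rparr>) Mod K)" using KN2 normal.factorgroup_is_group by blast
      have AG1: "group (A Mod H1)" and AG2: "group (A Mod H2)" using H1n H2n normal.factorgroup_is_group by auto
      have simQ1: "simple_group ((A\<lparr>carrier := H1\<rparr>) Mod K)"
        using simple_iso[OF sim2 QG1 group.iso_sym[OF QG1 iso2]] .
      have simQ2: "simple_group ((A\<lparr>carrier := H2\<rparr>) Mod K)"
        using simple_iso[OF sim1 QG2 group.iso_sym[OF QG2 iso1]] .
      have Ks: "subgroup K A" unfolding K_def using H1s H2s by (rule subgroups_Inter_pair)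
      have gK: "group (A\<lparr>carrier := K\<rparr>)" using Ks subgroup_imp_group by blast
      have finK: "finite (carrier (A\<lparr>carrier := K\<rparr>))"
        using less.prems(2) Ks subgroup.subset finite_subset by fastforce
      obtain csK mK where fK: "finite_composition_series (A\<lparr>carrier := K\<rparr>) csK mK"
        using fcs_exists[OF gK finK] by blast
      have fK1: "finite_composition_series (A\<lparr>carrier := H1\<rparr>\<lparr>carrier := K\<rparr>) csK mK" using fK by simp
      have fK2: "finite_composition_series (A\<lparr>carrier := H2\<rparr>\<lparr>carrier := K\<rparr>) csK mK" using fK by simp
      note cons1 = fcs_cons(1)[OF g1 KN1 simQ1 fK1] fcs_cons(2)[OF g1 KN1 simQ1 fK1, where S=S]
      note cons2 = fcs_cons(1)[OF g2 KN2 simQ2 fK2] fcs_cons(2)[OF g2 KN2 simQ2 fK2, where S=S]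
      have e1: "cnt (A\<lparr>carrier := H1\<rparr>) (\<lambda>i. cs (Suc i)) k S = (if ((A\<lparr>carrier := H1\<rparr>) Mod K) \<cong> S then 1 else 0) + cnt (A\<lparr>carrier := K\<rparr>) csK mK S"
        using less.hyps[OF lt1 g1 fin1 t1 cons1(1)] cons1(2) by simp
      have e2: "cnt (A\<lparr>carrier := H2\<rparr>) (\<lambda>i. cs' (Suc i)) k' S = (if ((A\<lparr>carrier := H2\<rparr>) Mod K) \<cong> S then 1 else 0) + cnt (A\<lparr>carrier := K\<rparr>) csK mK S"
        using less.hyps[OF lt2 g2 fin2 t2 cons2(1)] cons2(2) by simp
      have i1: "((A\<lparr>carrier := H1\<rparr>) Mod K \<cong> S) = (A Mod H2 \<cong> S)" by (rule iso_cong_S[OF QG1 AG2 iso2])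
      have i2: "((A\<lparr>carrier := H2\<rparr>) Mod K \<cong> S) = (A Mod H1 \<cong> S)" by (rule iso_cong_S[OF QG2 AG1 iso1])
      show ?thesis using c1 c2 e1 e2 i1 i2 mk mk' by simp
    qed
  qed
qed

lemma osucc_props:
  fixes \<alpha> \<mu> :: "'i::wellorder"
  assumes "\<alpha> < \<mu>"
  shows "\<alpha> < osucc \<alpha>" "osucc \<alpha> \<le> \<mu>" "\<And>\<gamma>. \<alpha> < \<gamma> \<Longrightarrow> osucc \<alpha> \<le> \<gamma>"
  unfolding osucc_def using assms by (auto intro: LeastI Least_le)

lemma ord_cases:
  fixes \<beta> :: "'i::wellorder"
  obtains (bot) "\<forall>\<gamma>. \<not> \<gamma> < \<beta>" | (succ) \<gamma> where "\<gamma> < \<beta>" "\<beta> = osucc \<gamma>" | (lim) "is_limit \<beta>"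
proof -
  consider "\<forall>\<gamma>. \<not> \<gamma> < \<beta>" | "is_limit \<beta>" | "(\<exists>\<gamma>. \<gamma> < \<beta>) \<and> \<not> is_limit \<beta>" by blast
  then show ?thesis
  proof cases
    case 1 then show ?thesis using that by blast
  next
    case 2 then show ?thesis using that by blast
  next
    case 3
    then obtain \<delta> where \<delta>: "\<delta> < \<beta>" "\<forall>\<gamma>. \<delta> < \<gamma> \<longrightarrow> \<not> \<gamma> < \<beta>" unfolding is_limit_def by blast
    have "osucc \<delta> \<le> \<beta>" using osucc_props(3)[OF \<delta>(1) \<delta>(1)] .
    moreover have "\<not> osucc \<delta> < \<beta>" using \<delta> osucc_props(1)[OF \<delta>(1)] by blast
    ultimately have "\<beta> = osucc \<delta>" by simp
    then show ?thesis using that(2) \<delta>(1) by blast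
  qed
qed

lemma hom_restr:
  "h \<in> hom G H \<Longrightarrow> S \<subseteq> carrier G \<Longrightarrow> h ` S \<subseteq> R \<Longrightarrow> h \<in> hom (G\<lparr>carrier := S\<rparr>) (H\<lparr>carrier := R\<rparr>)"
  unfolding hom_def by (auto simp: Pi_def subset_iff)

lemma mk_group_hom: "group G \<Longrightarrow> group H \<Longrightarrow> h \<in> hom G H \<Longrightarrow> group_hom G H h"
  by (simp add: group_hom_def group_hom_axioms_def)

definition Kset :: "'a monoid \<Rightarrow> ('i \<Rightarrow> 'a set) \<Rightarrow> 'a set \<Rightarrow> 'i \<Rightarrow> 'a set set" where
  "Kset G Gs N \<alpha> = (\<lambda>g. N #>\<^bsub>G\<^esub> g) ` Gs \<alpha>"

definition Jset :: "'a monoid \<Rightarrow> ('i::wellorder \<Rightarrow> 'a set) \<Rightarrow> 'i \<Rightarrow> 'a set \<Rightarrow> 'i set" where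
  "Jset G Gs \<mu> N = {\<alpha>. \<alpha> < \<mu> \<and> Kset G Gs N \<alpha> \<noteq> Kset G Gs N (osucc \<alpha>)}"

locale cser = profin G T for G (structure) and T +
  fixes Gs :: "'i::wellorder \<Rightarrow> 'a set" and \<mu> :: 'i
  assumes cs: "composition_series G T Gs \<mu>"
begin

lemma acc: "accessible_series G T Gs \<mu>" using cs by (simp add: composition_series_def)

lemmas accs = acc[unfolded accessible_series_def]
lemma c1: "\<forall>\<alpha>\<le>\<mu>. (\<forall>\<beta>. \<not> \<beta> < \<alpha>) \<longrightarrow> Gs \<alpha> = carrier G" using accs by (rule conjunct1)
lemma c2: "Gs \<mu> = {\<one>}" using accs[THEN conjunct2] by (rule conjunct1)
lemma c3: "\<forall>\<alpha>\<le>\<mu>. subgroup (Gs \<alpha>) G \<and> closedin T (Gs \<alpha>)" using accs[THEN conjunct2, THEN conjunct2] by (rule conjunct1)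
lemma c4: "\<forall>\<alpha> \<beta>. \<alpha> \<le> \<beta> \<and> \<beta> \<le> \<mu> \<longrightarrow> Gs \<beta> \<subseteq> Gs \<alpha>" using accs[THEN conjunct2, THEN conjunct2, THEN conjunct2] by (rule conjunct1)
lemma c5: "\<forall>\<alpha><\<mu>. Gs (osucc \<alpha>) \<lhd> (G\<lparr>carrier := Gs \<alpha>\<rparr>)" using accs[THEN conjunct2, THEN conjunct2, THEN conjunct2, THEN conjunct2] by (rule conjunct1)
lemma c6: "\<forall>\<alpha>\<le>\<mu>. is_limit \<alpha> \<longrightarrow> Gs \<alpha> = (\<Inter>\<beta>\<in>{..<\<alpha>}. Gs \<beta>)" using accs[THEN conjunct2, THEN conjunct2, THEN conjunct2, THEN conjunct2] by (rule conjunct2)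

lemma G_bot: "(\<forall>\<beta>. \<not> \<beta> < \<alpha>) \<Longrightarrow> \<alpha> \<le> \<mu> \<Longrightarrow> Gs \<alpha> = carrier G"
  using c1 by blast
lemma G_top: "Gs \<mu> = {\<one>}" by (rule c2)
lemma G_sub: "\<alpha> \<le> \<mu> \<Longrightarrow> subgroup (Gs \<alpha>) G"
  using c3 by blast
lemma G_closed: "\<alpha> \<le> \<mu> \<Longrightarrow> closedin T (Gs \<alpha>)"
  using c3 by blast
lemma G_mono: "\<alpha> \<le> \<beta> \<Longrightarrow> \<beta> \<le> \<mu> \<Longrightarrow> Gs \<beta> \<subseteq> Gs \<alpha>"
  using c4 by blast
lemma G_nrm: "\<alpha> < \<mu> \<Longrightarrow> Gs (osucc \<alpha>) \<lhd> G\<lparr>carrier := Gs \<alpha>\<rparr>"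
  using c5 by blast
lemma G_lim: "\<alpha> \<le> \<mu> \<Longrightarrow> is_limit \<alpha> \<Longrightarrow> Gs \<alpha> = (\<Inter>\<beta>\<in>{..<\<alpha>}. Gs \<beta>)"
  using c6 by blast
lemma G_fac: "\<alpha> < \<mu> \<Longrightarrow> simple_group ((G\<lparr>carrier := Gs \<alpha>\<rparr>) Mod (Gs (osucc \<alpha>)))"
proof -
  have "\<forall>\<alpha><\<mu>. finite (carrier (series_factor G Gs \<alpha>)) \<and> simple_group (series_factor G Gs \<alpha>)"
    using cs unfolding composition_series_def by (rule conjunct2)
  then show "\<alpha> < \<mu> \<Longrightarrow> simple_group ((G\<lparr>carrier := Gs \<alpha>\<rparr>) Mod (Gs (osucc \<alpha>)))"
    unfolding series_factor_def by blast
qed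

lemma G_sub_carrier: "\<alpha> \<le> \<mu> \<Longrightarrow> Gs \<alpha> \<subseteq> carrier G"
  using G_sub subgroup.subset by blast

lemma factor_nontriv:
  assumes "\<alpha> < \<mu>" shows "\<exists>x\<in>Gs \<alpha>. x \<notin> Gs (osucc \<alpha>)"
proof -
  have gA: "group (G\<lparr>carrier := Gs \<alpha>\<rparr>)" using G_sub assms subgroup_imp_group by simp
  have "Gs (osucc \<alpha>) \<noteq> carrier (G\<lparr>carrier := Gs \<alpha>\<rparr>)"
    using group.simple_quot_proper[OF gA normal_imp_subgroup[OF G_nrm[OF assms]] G_fac[OF assms]] .
  moreover have "Gs (osucc \<alpha>) \<subseteq> Gs \<alpha>" using G_mono osucc_props[OF assms] by (simp add: less_imp_le)
  ultimately show ?thesis by auto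
qed

end

locale cserN = cser +
  fixes N :: "'a set"
  assumes Nn: "N \<lhd> G" and Ncl: "closedin T N" and Nfin: "finite (carrier (G Mod N))"
begin

abbreviation "K \<equiv> Kset G Gs N"
abbreviation "J \<equiv> Jset G Gs \<mu> N"

lemma Ns: "subgroup N G" using Nn normal_imp_subgroup by blast
lemma Nsub: "N \<subseteq> carrier G" using Ns subgroup.subset by blast
lemma AG: "group (G Mod N)" using Nn normal.factorgroup_is_group by blast

lemma K_sub_carrier: "\<alpha> \<le> \<mu> \<Longrightarrow> K \<alpha> \<subseteq> carrier (G Mod N)"
  using G_sub_carrier unfolding Kset_def carrier_FactGroup by blast

lemma K_mono: "\<alpha> \<le> \<beta> \<Longrightarrow> \<beta> \<le> \<mu> \<Longrightarrow> K \<beta> \<subseteq> K \<alpha>"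
  unfolding Kset_def using G_mono by blast

lemma K_bot: "(\<forall>\<beta>. \<not> \<beta> < \<alpha>) \<Longrightarrow> \<alpha> \<le> \<mu> \<Longrightarrow> K \<alpha> = carrier (G Mod N)"
  unfolding Kset_def carrier_FactGroup using G_bot by simp

lemma K_top: "K \<mu> = {\<one>\<^bsub>G Mod N\<^esub>}"
  unfolding Kset_def G_top using Nsub by simp

lemma phi_hom: "(\<lambda>g. N #> g) \<in> hom G (G Mod N)"
  using normal.r_coset_hom_Mod[OF Nn] .

lemma K_subgroup: "\<alpha> \<le> \<mu> \<Longrightarrow> subgroup (K \<alpha>) (G Mod N)"
  unfolding Kset_def
  using group_hom.subgroup_img_is_subgroup[OF mk_group_hom[OF is_group AG phi_hom] G_sub] by blast

lemma K_lim:
  assumes b: "\<beta> \<le> \<mu>" and lim: "is_limit \<beta>" and C: "\<forall>\<delta><\<beta>. C \<in> K \<delta>"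
  shows "C \<in> K \<beta>"
proof -
  obtain \<delta>0 where \<delta>0: "\<delta>0 < \<beta>" using lim unfolding is_limit_def by blast
  then obtain x where x: "x \<in> Gs \<delta>0" "C = N #> x" using C unfolding Kset_def by blast
  have "\<delta>0 \<le> \<mu>" using \<delta>0 b by simp
  then have xc: "x \<in> carrier G" using x G_sub_carrier by blast
  define U where "U \<delta> = Gs \<delta> \<inter> (N #> x)" for \<delta>
  have Ucl: "closedin T (U \<delta>)" if "\<delta> < \<beta>" for \<delta>
    unfolding U_def using that b by (intro closedin_Int G_closed closedin_rcos[OF Ncl xc]) simp
  have Une: "U \<delta> \<noteq> {}" if d: "\<delta> < \<beta>" for \<delta>
  proof -
    obtain g where g: "g \<in> Gs \<delta>" "C = N #> g" using C d unfolding Kset_def by blast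
    have "\<delta> \<le> \<mu>" using d b by simp
    then have "g \<in> carrier G" using g G_sub_carrier by blast
    then have "g \<in> N #> g" using Ns by (simp add: rcos_self)
    then show ?thesis using g x unfolding U_def by auto
  qed
  have fc1: "\<forall>C\<in>U ` {..<\<beta>}. closedin T C" using Ucl by auto
  have fc2: "\<forall>F. finite F \<and> F \<subseteq> U ` {..<\<beta>} \<longrightarrow> \<Inter>F \<noteq> {}"
  proof -
    show "\<forall>F. finite F \<and> F \<subseteq> U ` {..<\<beta>} \<longrightarrow> \<Inter>F \<noteq> {}"
    proof (intro allI impI, elim conjE)
      fix F assume F: "finite F" "F \<subseteq> U ` {..<\<beta>}"
      then obtain D where D: "D \<subseteq> {..<\<beta>}" "finite D" "F = U ` D" by (metis finite_subset_image)
      show "\<Inter>F \<noteq> {}"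
      proof (cases "D = {}")
        case True then show ?thesis using D by simp
      next
        case False
        define \<delta>m where "\<delta>m = Max D"
        have \<delta>mD: "\<delta>m \<in> D" using D False unfolding \<delta>m_def by simp
        have "U \<delta>m \<subseteq> \<Inter>F"
        proof
          fix y assume y: "y \<in> U \<delta>m"
          { fix \<delta> assume "\<delta> \<in> D"
            then have "\<delta> \<le> \<delta>m" using D unfolding \<delta>m_def by simp
            moreover have "\<delta>m \<le> \<mu>" using \<delta>mD D b by auto
            ultimately have "U \<delta>m \<subseteq> U \<delta>" unfolding U_def using G_mono by blast }
          then show "y \<in> \<Inter>F" using y D by blast
        qed
        moreover have "U \<delta>m \<noteq> {}" using Une \<delta>mD D by blast
        ultimately show ?thesis by blast
      qed
    qed
  qed
  have "\<Inter>(U ` {..<\<beta>}) \<noteq> {}" using cpt[unfolded compact_space_fip, rule_format, OF conjI[OF fc1 fc2]] .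
  then obtain y where y: "\<forall>\<delta><\<beta>. y \<in> Gs \<delta>" "y \<in> N #> x" unfolding U_def using \<delta>0 by blast
  have "y \<in> Gs \<beta>" using G_lim[OF b lim] y(1) by blast
  moreover have "N #> x = N #> y" using repr_independence[OF y(2) xc Ns] .
  ultimately show ?thesis using x unfolding Kset_def by blast
qed

lemma K_const:
  assumes "\<alpha> \<le> \<beta>" "\<beta> \<le> \<mu>" "\<forall>\<gamma>. \<alpha> \<le> \<gamma> \<and> \<gamma> < \<beta> \<longrightarrow> \<gamma> \<notin> J"
  shows "K \<beta> = K \<alpha>"
  using assms
proof (induction \<beta> rule: less_induct)
  case (less \<beta>)
  show ?case
  proof (cases "\<beta> = \<alpha>")
    case True then show ?thesis by simp
  next
    case False
    then have ab: "\<alpha> < \<beta>" using less.prems by simp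
    show ?thesis
    proof (cases \<beta> rule: ord_cases)
      case bot then show ?thesis using ab by blast
    next
      case (succ \<gamma>)
      have gm: "\<gamma> < \<mu>" using succ less.prems by simp
      have "\<alpha> \<le> \<gamma>"
      proof (rule ccontr)
        assume "\<not> \<alpha> \<le> \<gamma>"
        then have "osucc \<gamma> \<le> \<alpha>" using osucc_props(3)[OF gm] by simp
        then show False using succ ab by simp
      qed
      then have "\<gamma> \<notin> J" using less.prems succ by blast
      then have "K (osucc \<gamma>) = K \<gamma>" using gm unfolding Jset_def by auto
      moreover have "\<forall>\<gamma>'. \<alpha> \<le> \<gamma>' \<and> \<gamma>' < \<gamma> \<longrightarrow> \<gamma>' \<notin> J"
        using less.prems(3) succ(1) by (meson order.strict_trans)
      then have "K \<gamma> = K \<alpha>" using less.IH[of \<gamma>] succ less.prems \<open>\<alpha> \<le> \<gamma>\<close> gm by simp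
      ultimately show ?thesis using succ by simp
    next
      case lim
      have "K \<alpha> \<subseteq> K \<beta>"
      proof
        fix C assume CK: "C \<in> K \<alpha>"
        have "\<forall>\<delta><\<beta>. C \<in> K \<delta>"
        proof (intro allI impI)
          fix \<delta> assume d: "\<delta> < \<beta>"
          show "C \<in> K \<delta>"
          proof (cases "\<alpha> \<le> \<delta>")
            case True
            moreover have "\<forall>\<gamma>'. \<alpha> \<le> \<gamma>' \<and> \<gamma>' < \<delta> \<longrightarrow> \<gamma>' \<notin> J"
              using less.prems(3) d by (meson order.strict_trans)
            moreover have "\<delta> \<le> \<mu>" using d less.prems by simp
            ultimately have "K \<delta> = K \<alpha>" using less.IH[of \<delta>] d by simp
            then show ?thesis using CK by simp
          next
            case False
            then have "K \<alpha> \<subseteq> K \<delta>" using K_mono[of \<delta> \<alpha>] less.prems ab by simp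
            then show ?thesis using CK by blast
          qed
        qed
        then show "C \<in> K \<beta>" using K_lim lim less.prems by blast
      qed
      moreover have "K \<beta> \<subseteq> K \<alpha>" using K_mono less.prems by blast
      ultimately show ?thesis by blast
    qed
  qed
qed

lemma J_lt: "\<alpha> \<in> J \<Longrightarrow> \<alpha> < \<mu>" unfolding Jset_def by blast

lemma J_finite: "finite J"
proof -
  have aux: "K (osucc \<alpha>) \<noteq> K (osucc \<alpha>')" if "\<alpha> \<in> J" "\<alpha>' \<in> J" "\<alpha> < \<alpha>'" for \<alpha> \<alpha>'
  proof
    assume eq: "K (osucc \<alpha>) = K (osucc \<alpha>')"
    have m: "\<alpha>' < \<mu>" "\<alpha> < \<mu>" using that J_lt by auto
    have "osucc \<alpha> \<le> \<alpha>'" using osucc_props(3)[OF m(2) that(3)] .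
    then have "K \<alpha>' \<subseteq> K (osucc \<alpha>)" using K_mono m by simp
    moreover have "K (osucc \<alpha>') \<subseteq> K \<alpha>'" using K_mono osucc_props[OF m(1)] by (simp add: less_imp_le)
    ultimately have "K \<alpha>' = K (osucc \<alpha>')" using eq by blast
    then show False using that(2) unfolding Jset_def by blast
  qed
  have "inj_on (\<lambda>\<alpha>. K (osucc \<alpha>)) J"
  proof (rule inj_onI)
    fix \<alpha> \<alpha>' assume "\<alpha> \<in> J" "\<alpha>' \<in> J" "K (osucc \<alpha>) = K (osucc \<alpha>')"
    then show "\<alpha> = \<alpha>'" using aux by (metis linorder_neqE)
  qed
  moreover have "(\<lambda>\<alpha>. K (osucc \<alpha>)) ` J \<subseteq> Pow (carrier (G Mod N))"
    using K_sub_carrier osucc_props(2) J_lt by blast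
  then have "finite ((\<lambda>\<alpha>. K (osucc \<alpha>)) ` J)" using Nfin finite_subset by blast
  ultimately show ?thesis using finite_imageD by blast
qed

end

context cserN
begin

lemma J_factor:
  assumes aJ: "\<alpha> \<in> J"
  shows "K (osucc \<alpha>) \<lhd> (G Mod N)\<lparr>carrier := K \<alpha>\<rparr>"
    and "group (((G Mod N)\<lparr>carrier := K \<alpha>\<rparr>) Mod K (osucc \<alpha>))"
    and "((G\<lparr>carrier := Gs \<alpha>\<rparr>) Mod Gs (osucc \<alpha>)) \<cong> (((G Mod N)\<lparr>carrier := K \<alpha>\<rparr>) Mod K (osucc \<alpha>))"
proof -
  have am: "\<alpha> < \<mu>" using aJ J_lt by blast
  have a'm: "osucc \<alpha> \<le> \<mu>" using osucc_props(2)[OF am] .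
  have aa': "\<alpha> \<le> osucc \<alpha>" using osucc_props(1)[OF am] by simp
  define A where "A = G Mod N"
  define Aa where "Aa = A\<lparr>carrier := K \<alpha>\<rparr>"
  define Ga where "Ga = G\<lparr>carrier := Gs \<alpha>\<rparr>"
  define K' where "K' = K (osucc \<alpha>)"
  define Q where "Q = Aa Mod K'"
  have AG': "group A" unfolding A_def by (rule AG)
  have gGa: "group Ga" unfolding Ga_def using G_sub[of \<alpha>] am subgroup_imp_group by simp
  have gAa: "group Aa" unfolding Aa_def A_def using K_subgroup[of \<alpha>] am group.subgroup_imp_group[OF AG] by simp
  have Kasub: "K \<alpha> \<subseteq> carrier A" unfolding A_def using K_sub_carrier am by simp
  have K'sub: "K' \<subseteq> K \<alpha>" unfolding K'_def using K_mono[OF aa' a'm] .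
  have K's: "subgroup K' Aa"
    unfolding Aa_def K'_def A_def
    using group.subgroup_incl[OF AG K_subgroup[OF a'm] K_subgroup[of \<alpha>]] am K'sub[unfolded K'_def] by simp
  have phi1: "(\<lambda>g. N #> g) \<in> hom Ga Aa"
    unfolding Ga_def Aa_def A_def
    by (rule hom_restr[OF phi_hom G_sub_carrier]) (use am in \<open>auto simp: Kset_def\<close>)
  have phisurj: "(\<lambda>g. N #> g) ` carrier Ga = carrier Aa" unfolding Ga_def Aa_def by (simp add: Kset_def)
  have ghom1: "group_hom Ga Aa (\<lambda>g. N #> g)" by (rule mk_group_hom[OF gGa gAa phi1])
  interpret nGa: normal "Gs (osucc \<alpha>)" Ga unfolding Ga_def by (rule G_nrm[OF am])
  have K'n: "K' \<lhd> Aa"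
  proof -
    have "(\<lambda>g. N #> g) ` Gs (osucc \<alpha>) \<lhd> Aa" by (rule nGa.surj_hom_normal_subgroup[OF ghom1 phisurj])
    then show ?thesis unfolding K'_def Kset_def by simp
  qed
  then show "K (osucc \<alpha>) \<lhd> (G Mod N)\<lparr>carrier := K \<alpha>\<rparr>" unfolding K'_def Aa_def A_def .
  interpret nAa: normal K' Aa by (rule K'n)
  have gQ: "group Q" unfolding Q_def by (rule nAa.factorgroup_is_group)
  then show "group (((G Mod N)\<lparr>carrier := K \<alpha>\<rparr>) Mod K (osucc \<alpha>))" unfolding Q_def Aa_def A_def K'_def .
  define h where "h = (\<lambda>a. K' #>\<^bsub>Aa\<^esub> a) \<circ> (\<lambda>g. N #> g)"
  have hhom: "h \<in> hom Ga Q" unfolding h_def Q_def by (rule Group.hom_compose[OF phi1 nAa.r_coset_hom_Mod])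
  have ghom: "group_hom Ga Q h" by (rule mk_group_hom[OF gGa gQ hhom])
  have hsurj: "h ` carrier Ga = carrier Q"
    unfolding h_def Q_def image_comp[symmetric] phisurj by (simp add: carrier_FactGroup)
  define Ker where "Ker = kernel Ga Q h"
  have Kern: "Ker \<lhd> Ga" unfolding Ker_def by (rule group_hom.normal_kernel[OF ghom])
  have sub1: "Gs (osucc \<alpha>) \<subseteq> Ker"
  proof
    fix g assume g: "g \<in> Gs (osucc \<alpha>)"
    have ga: "g \<in> Gs \<alpha>" using g G_mono[OF aa' a'm] by blast
    have "N #> g \<in> K'" using g unfolding K'_def Kset_def by blast
    then have "K' #>\<^bsub>Aa\<^esub> (N #> g) = K'" by (rule subgroup.rcos_const[OF K's gAa])
    then show "g \<in> Ker" using ga unfolding Ker_def kernel_def h_def Q_def Ga_def by simp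
  qed
  have "Ker = Gs (osucc \<alpha>) \<or> Ker = carrier Ga"
    using group.simple_quot_max[OF gGa nGa.normal_axioms Kern sub1] G_fac[OF am] unfolding Ga_def by simp
  moreover have "Ker \<noteq> carrier Ga"
  proof
    assume KG: "Ker = carrier Ga"
    have "K \<alpha> \<subseteq> K'"
    proof
      fix a assume a: "a \<in> K \<alpha>"
      then obtain g where g: "g \<in> Gs \<alpha>" "a = N #> g" unfolding Kset_def by blast
      then have "g \<in> Ker" using KG unfolding Ga_def by simp
      then have e: "K' #>\<^bsub>Aa\<^esub> a = K'" using g unfolding Ker_def kernel_def h_def Q_def by simp
      have "a \<in> carrier Aa" using a unfolding Aa_def by simp
      then have "a \<in> K' #>\<^bsub>Aa\<^esub> a" by (rule group.rcos_self[OF gAa _ K's])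
      then show "a \<in> K'" using e by simp
    qed
    then have "K \<alpha> = K (osucc \<alpha>)" using K'sub unfolding K'_def by blast
    then show False using aJ unfolding Jset_def by blast
  qed
  ultimately have KerE: "Ker = Gs (osucc \<alpha>)" by blast
  have "(Ga Mod Ker) \<cong> Q" unfolding Ker_def by (rule group_hom.FactGroup_iso[OF ghom hsurj])
  then show "((G\<lparr>carrier := Gs \<alpha>\<rparr>) Mod Gs (osucc \<alpha>)) \<cong> (((G Mod N)\<lparr>carrier := K \<alpha>\<rparr>) Mod K (osucc \<alpha>))"
    unfolding KerE Ga_def Q_def Aa_def A_def K'_def .
qed

lemma J_intro:
  assumes am: "\<alpha> < \<mu>" and x: "x \<in> Gs \<alpha>" and avoid: "\<forall>n\<in>N. n \<otimes> x \<notin> Gs (osucc \<alpha>)"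
  shows "\<alpha> \<in> J"
proof -
  have "N #> x \<notin> K (osucc \<alpha>)"
  proof
    assume "N #> x \<in> K (osucc \<alpha>)"
    then obtain g where g: "g \<in> Gs (osucc \<alpha>)" "N #> x = N #> g" unfolding Kset_def by blast
    have gc: "g \<in> carrier G" using g(1) G_sub_carrier osucc_props(2)[OF am] by blast
    have "g \<in> N #> g" using Ns gc by (simp add: rcos_self)
    then have "g \<in> N #> x" using g by simp
    then obtain n where "n \<in> N" "g = n \<otimes> x" unfolding r_coset_def by blast
    then show False using avoid g by blast
  qed
  moreover have "N #> x \<in> K \<alpha>" using x unfolding Kset_def by blast
  ultimately show ?thesis using am unfolding Jset_def by blast
qed

end

context cserN
begin

lemma series_exists:
  "\<exists>cs m. finite_composition_series (G Mod N) cs m \<and>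
     cnt (G Mod N) cs m S = card {\<alpha>\<in>J. series_factor G Gs \<alpha> \<cong> S}"
proof -
  define xs where "xs = sorted_list_of_set J"
  have setxs: "set xs = J" unfolding xs_def using J_finite by simp
  have dist: "distinct xs" unfolding xs_def by simp
  have sw: "sorted_wrt (<) xs" unfolding xs_def by (rule strict_sorted_list_of_set)
  define m where "m = length xs"
  have xsJ: "xs ! i \<in> J" if "i < m" for i using that setxs unfolding m_def by (metis nth_mem)
  have mono2: "xs ! i < xs ! k" if "i < k" "k < m" for i k
    using sorted_wrt_nth_less[OF sw that(1)] that(2) unfolding m_def by simp
  have mono: "i < k" if "i < m" "k < m" "xs ! i < xs ! k" for i k
  proof (rule ccontr)
    assume "\<not> i < k"
    then have "k < i \<or> k = i" by auto
    then show False using mono2[of k i] that by auto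
  qed
  have inJ: "\<exists>k<m. \<gamma> = xs ! k" if "\<gamma> \<in> J" for \<gamma>
    using that setxs unfolding m_def by (metis in_set_conv_nth)
  define cs where "cs i = (if i < m then K (xs ! i) else K \<mu>)" for i
  have nxt: "cs (Suc i) = K (osucc (xs ! i))" if im: "i < m" for i
  proof -
    define \<alpha> where "\<alpha> = xs ! i"
    have aJ: "\<alpha> \<in> J" using xsJ im unfolding \<alpha>_def by blast
    have am: "\<alpha> < \<mu>" using aJ J_lt by blast
    show ?thesis
    proof (cases "Suc i < m")
      case True
      define \<beta> where "\<beta> = xs ! Suc i"
      have ab: "\<alpha> < \<beta>" unfolding \<alpha>_def \<beta>_def using mono2 True by simp
      have bm: "\<beta> \<le> \<mu>" using xsJ[OF True] J_lt unfolding \<beta>_def by (simp add: less_imp_le)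
      have "K \<beta> = K (osucc \<alpha>)"
      proof (rule K_const)
        show "osucc \<alpha> \<le> \<beta>" using osucc_props(3)[OF am ab] .
        show "\<beta> \<le> \<mu>" by (rule bm)
        show "\<forall>\<gamma>. osucc \<alpha> \<le> \<gamma> \<and> \<gamma> < \<beta> \<longrightarrow> \<gamma> \<notin> J"
        proof (intro allI impI notI, elim conjE)
          fix \<gamma> assume g1: "osucc \<alpha> \<le> \<gamma>" and g2: "\<gamma> < \<beta>" and gJ: "\<gamma> \<in> J"
          obtain k where k: "k < m" "\<gamma> = xs ! k" using inJ[OF gJ] by blast
          have "\<alpha> < \<gamma>" using osucc_props(1)[OF am] g1 by simp
          then have "i < k" using mono[OF im k(1)] k unfolding \<alpha>_def by simp
          then have "Suc i = k \<or> Suc i < k" by auto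
          then show False
          proof
            assume "Suc i = k" then show False using g2 k unfolding \<beta>_def by simp
          next
            assume "Suc i < k" then have "\<beta> < \<gamma>" using mono2 k unfolding \<beta>_def by simp
            then show False using g2 by simp
          qed
        qed
      qed
      then show ?thesis unfolding cs_def \<beta>_def \<alpha>_def using True by simp
    next
      case False
      then have mSi: "m = Suc i" using im by simp
      have "K \<mu> = K (osucc \<alpha>)"
      proof (rule K_const)
        show "osucc \<alpha> \<le> \<mu>" using osucc_props(2)[OF am] .
        show "\<mu> \<le> \<mu>" by simp
        show "\<forall>\<gamma>. osucc \<alpha> \<le> \<gamma> \<and> \<gamma> < \<mu> \<longrightarrow> \<gamma> \<notin> J"
        proof (intro allI impI notI, elim conjE)
          fix \<gamma> assume g1: "osucc \<alpha> \<le> \<gamma>" and gJ: "\<gamma> \<in> J"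
          obtain k where k: "k < m" "\<gamma> = xs ! k" using inJ[OF gJ] by blast
          have "\<alpha> < \<gamma>" using osucc_props(1)[OF am] g1 by simp
          then have "i < k" using mono[OF im k(1)] k unfolding \<alpha>_def by simp
          then show False using k mSi by simp
        qed
      qed
      then show ?thesis unfolding cs_def \<alpha>_def using False by simp
    qed
  qed
  define b where "b = (LEAST x. x \<le> \<mu>)"
  have bm: "b \<le> \<mu>" unfolding b_def by (rule LeastI[of _ \<mu>]) simp
  have bbot: "\<forall>\<beta>. \<not> \<beta> < b"
  proof (intro allI notI)
    fix \<beta> assume "\<beta> < b"
    then have "\<not> \<beta> \<le> \<mu>" unfolding b_def by (rule not_less_Least)
    then show False using \<open>\<beta> < b\<close> bm by simp
  qed
  have Kb: "K b = carrier (G Mod N)" using K_bot[OF bbot bm] .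
  have cs0: "cs 0 = carrier (G Mod N)"
  proof (cases "0 < m")
    case True
    have "K (xs ! 0) = K b"
    proof (rule K_const)
      show "b \<le> xs ! 0" using bbot by (simp add: not_less[symmetric])
      show "xs ! 0 \<le> \<mu>" using xsJ[OF True] J_lt by (simp add: less_imp_le)
      show "\<forall>\<gamma>. b \<le> \<gamma> \<and> \<gamma> < xs ! 0 \<longrightarrow> \<gamma> \<notin> J"
      proof (intro allI impI notI, elim conjE)
        fix \<gamma> assume g2: "\<gamma> < xs ! 0" and gJ: "\<gamma> \<in> J"
        obtain k where k: "k < m" "\<gamma> = xs ! k" using inJ[OF gJ] by blast
        then have "k < 0" using mono[OF k(1) True] g2 by simp
        then show False by simp
      qed
    qed
    then show ?thesis unfolding cs_def using True Kb by simp
  next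
    case False
    then have "J = {}" using setxs unfolding m_def by auto
    then have "K \<mu> = K b" using K_const[OF bm] by simp
    then show ?thesis unfolding cs_def using False Kb by simp
  qed
  have csm: "cs m = {\<one>\<^bsub>G Mod N\<^esub>}" unfolding cs_def using K_top by simp
  have fac: "cs (Suc i) \<lhd> (G Mod N)\<lparr>carrier := cs i\<rparr> \<and> group (((G Mod N)\<lparr>carrier := cs i\<rparr>) Mod cs (Suc i))
     \<and> (series_factor G Gs (xs ! i)) \<cong> (((G Mod N)\<lparr>carrier := cs i\<rparr>) Mod cs (Suc i))" if im: "i < m" for i
    using J_factor[OF xsJ[OF im]] nxt[OF im] im unfolding cs_def series_factor_def by simp
  have sgF: "simple_group (series_factor G Gs (xs ! i))" if im: "i < m" for i
    using G_fac xsJ[OF im] J_lt unfolding series_factor_def by blast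
  have fcs: "finite_composition_series (G Mod N) cs m"
    unfolding finite_composition_series_def
  proof (intro conjI allI impI)
    show "cs 0 = carrier (G Mod N)" by (rule cs0)
    show "cs m = {\<one>\<^bsub>G Mod N\<^esub>}" by (rule csm)
    show "subgroup (cs i) (G Mod N)" if "i \<le> m" for i
    proof (cases "i < m")
      case True then show ?thesis unfolding cs_def using K_subgroup xsJ J_lt by (simp add: less_imp_le)
    next
      case False then show ?thesis unfolding cs_def using K_subgroup by simp
    qed
    show "cs (Suc i) \<lhd> (G Mod N)\<lparr>carrier := cs i\<rparr>" if "i < m" for i using fac[OF that] by blast
    show "simple_group (((G Mod N)\<lparr>carrier := cs i\<rparr>) Mod cs (Suc i))" if "i < m" for i
      using simple_iso[OF sgF[OF that]] fac[OF that] by blast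
  qed
  have eqc: "{i. i < m \<and> (((G Mod N)\<lparr>carrier := cs i\<rparr>) Mod cs (Suc i)) \<cong> S}
      = {i. i < m \<and> series_factor G Gs (xs ! i) \<cong> S}"
  proof (rule Collect_cong)
    fix i show "(i < m \<and> (((G Mod N)\<lparr>carrier := cs i\<rparr>) Mod cs (Suc i)) \<cong> S) = (i < m \<and> series_factor G Gs (xs ! i) \<cong> S)"
    proof (cases "i < m")
      case True
      have gF: "group (series_factor G Gs (xs ! i))" using sgF[OF True] simple_group_def by blast
      show ?thesis using iso_cong_S[OF gF, of _ S] fac[OF True] True by blast
    qed simp
  qed
  have inj: "inj_on (nth xs) {i. i < m \<and> series_factor G Gs (xs ! i) \<cong> S}"
    by (rule inj_on_nth[OF dist]) (auto simp: m_def)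
  have e1: "cnt (G Mod N) cs m S = card (nth xs ` {i. i < m \<and> series_factor G Gs (xs ! i) \<cong> S})"
    unfolding cnt_def eqc card_image[OF inj] ..
  have "nth xs ` {i. i < m \<and> series_factor G Gs (xs ! i) \<cong> S} = {\<alpha>\<in>J. series_factor G Gs \<alpha> \<cong> S}"
  proof
    show "nth xs ` {i. i < m \<and> series_factor G Gs (xs ! i) \<cong> S} \<subseteq> {\<alpha>\<in>J. series_factor G Gs \<alpha> \<cong> S}"
      using xsJ by blast
    show "{\<alpha>\<in>J. series_factor G Gs \<alpha> \<cong> S} \<subseteq> nth xs ` {i. i < m \<and> series_factor G Gs (xs ! i) \<cong> S}"
    proof
      fix x assume x: "x \<in> {\<alpha>\<in>J. series_factor G Gs \<alpha> \<cong> S}"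
      then obtain k where k: "k < m" "x = xs ! k" using inJ by blast
      then show "x \<in> nth xs ` {i. i < m \<and> series_factor G Gs (xs ! i) \<cong> S}" using x by blast
    qed
  qed
  then show ?thesis using fcs e1 by auto
qed

end

context cser
begin

lemma counts_N:
  assumes N1: "N \<lhd> G" and N2: "closedin T N" and N3: "finite (carrier (G Mod N))"
  shows "finite (Jset G Gs \<mu> N)"
    and "card {\<alpha>\<in>Jset G Gs \<mu> N. series_factor G Gs \<alpha> \<cong> S} \<in> finite_quotient_counts G T S"
    and "\<And>cs m. finite_composition_series (G Mod N) cs m \<Longrightarrow>
           cnt (G Mod N) cs m S = card {\<alpha>\<in>Jset G Gs \<mu> N. series_factor G Gs \<alpha> \<cong> S}"
proof -
  interpret X: cserN G T Gs \<mu> N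
    by (intro cserN.intro cser.intro profin.intro cser_axioms.intro cserN_axioms.intro pg cs N1 N2 N3)
  show "finite (Jset G Gs \<mu> N)" by (rule X.J_finite)
  obtain cs0 m0 where s: "finite_composition_series (G Mod N) cs0 m0"
    "cnt (G Mod N) cs0 m0 S = card {\<alpha>\<in>Jset G Gs \<mu> N. series_factor G Gs \<alpha> \<cong> S}"
    using X.series_exists by blast
  have "comp_factor_count (G Mod N) S (card {\<alpha>\<in>Jset G Gs \<mu> N. series_factor G Gs \<alpha> \<cong> S})"
    unfolding comp_factor_count_def
    by (rule exI[of _ cs0], rule exI[of _ m0]) (use s in \<open>simp add: cnt_def\<close>)
  then show "card {\<alpha>\<in>Jset G Gs \<mu> N. series_factor G Gs \<alpha> \<cong> S} \<in> finite_quotient_counts G T S"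
    unfolding finite_quotient_counts_def using N1 N2 N3 by blast
  show "cnt (G Mod N) cs m S = card {\<alpha>\<in>Jset G Gs \<mu> N. series_factor G Gs \<alpha> \<cong> S}"
    if "finite_composition_series (G Mod N) cs m" for cs m
    using jh[OF X.AG N3 that s(1), where S=S] s(2) by simp
qed

lemma find_N:
  assumes fin: "finite F0" and sub: "F0 \<subseteq> {\<alpha>. \<alpha> < \<mu>}"
  shows "\<exists>N. N \<lhd> G \<and> closedin T N \<and> finite (carrier (G Mod N)) \<and> F0 \<subseteq> Jset G Gs \<mu> N"
proof -
  define xx where "xx \<alpha> = (SOME x. x \<in> Gs \<alpha> \<and> x \<notin> Gs (osucc \<alpha>))" for \<alpha>
  have xx: "xx \<alpha> \<in> Gs \<alpha> \<and> xx \<alpha> \<notin> Gs (osucc \<alpha>)" if "\<alpha> \<in> F0" for \<alpha>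
  proof -
    have "\<exists>x. x \<in> Gs \<alpha> \<and> x \<notin> Gs (osucc \<alpha>)" using factor_nontriv that sub by blast
    then show ?thesis unfolding xx_def by (rule someI_ex)
  qed
  have xxc: "xx \<alpha> \<in> carrier G" if "\<alpha> \<in> F0" for \<alpha>
  proof -
    have "\<alpha> \<le> \<mu>" using that sub by auto
    then show ?thesis using xx[OF that] G_sub_carrier by blast
  qed
  define C where "C = (\<Union>\<alpha>\<in>F0. {y \<in> topspace T. y \<otimes> xx \<alpha> \<in> Gs (osucc \<alpha>)})"
  have Ccl: "closedin T C" unfolding C_def
  proof (rule closedin_Union)
    show "finite ((\<lambda>\<alpha>. {y \<in> topspace T. y \<otimes> xx \<alpha> \<in> Gs (osucc \<alpha>)}) ` F0)" using fin by simp
    show "\<And>S. S \<in> (\<lambda>\<alpha>. {y \<in> topspace T. y \<otimes> xx \<alpha> \<in> Gs (osucc \<alpha>)}) ` F0 \<Longrightarrow> closedin T S"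
    proof -
      fix S assume "S \<in> (\<lambda>\<alpha>. {y \<in> topspace T. y \<otimes> xx \<alpha> \<in> Gs (osucc \<alpha>)}) ` F0"
      then obtain \<alpha> where a: "\<alpha> \<in> F0" "S = {y \<in> topspace T. y \<otimes> xx \<alpha> \<in> Gs (osucc \<alpha>)}" by blast
      have "\<alpha> < \<mu>" using a sub by auto
      then have "closedin T (Gs (osucc \<alpha>))" using G_closed osucc_props(2) by blast
      then show "closedin T S" unfolding a(2)
        by (rule closedin_continuous_map_preimage[OF rmul_cont[OF xxc[OF a(1)]]])
    qed
  qed
  have one: "\<one> \<notin> C" unfolding C_def using xx xxc by auto
  obtain N where N: "N \<lhd> G" "closedin T N" "finite (carrier (G Mod N))" "N \<inter> C = {}"
    using avoid_closed[OF Ccl one] by blast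
  interpret X: cserN G T Gs \<mu> N
    by (intro cserN.intro cser.intro profin.intro cser_axioms.intro cserN_axioms.intro pg cs N)
  have "F0 \<subseteq> Jset G Gs \<mu> N"
  proof
    fix \<alpha> assume a: "\<alpha> \<in> F0"
    have "\<forall>n\<in>N. n \<otimes> xx \<alpha> \<notin> Gs (osucc \<alpha>)"
    proof (intro ballI notI)
      fix n assume n: "n \<in> N" and "n \<otimes> xx \<alpha> \<in> Gs (osucc \<alpha>)"
      then have "n \<in> C" unfolding C_def using a X.Nsub top by auto
      then show False using N(4) n by blast
    qed
    then show "\<alpha> \<in> Jset G Gs \<mu> N" using X.J_intro[of \<alpha> "xx \<alpha>"] xx[OF a] a sub by blast
  qed
  then show ?thesis using N by blast
qed

lemma main:
  "(finite {\<alpha>. \<alpha> < \<mu> \<and> series_factor G Gs \<alpha> \<cong> S} \<and>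
          card {\<alpha>. \<alpha> < \<mu> \<and> series_factor G Gs \<alpha> \<cong> S} = n)
     \<longleftrightarrow> (n \<in> finite_quotient_counts G T S \<and> (\<forall>k\<in>finite_quotient_counts G T S. k \<le> n))"
proof -
  define F where "F = {\<alpha>. \<alpha> < \<mu> \<and> series_factor G Gs \<alpha> \<cong> S}"
  have counts_le: "\<exists>N. N \<lhd> G \<and> closedin T N \<and> finite (carrier (G Mod N)) \<and>
      k = card {\<alpha>\<in>Jset G Gs \<mu> N. series_factor G Gs \<alpha> \<cong> S}" if k: "k \<in> finite_quotient_counts G T S" for k
  proof -
    obtain N where N0: "closedin T N" "N \<lhd> G" "finite (carrier (G Mod N))" "comp_factor_count (G Mod N) S k"
      using k unfolding finite_quotient_counts_def by blast
    obtain cs m where N1: "finite_composition_series (G Mod N) cs m" "k = cnt (G Mod N) cs m S"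
      using N0(4) unfolding comp_factor_count_def cnt_def by blast
    note N = N0(1-3) N1
    then show ?thesis using counts_N(3)[OF N(2,1,3) N(4), where S=S] by metis
  qed
  have sub_F: "{\<alpha>\<in>Jset G Gs \<mu> N. series_factor G Gs \<alpha> \<cong> S} \<subseteq> F" for N
    unfolding F_def Jset_def by blast
  have fin_case: "card F \<in> finite_quotient_counts G T S \<and> (\<forall>k\<in>finite_quotient_counts G T S. k \<le> card F)"
    if fF: "finite F"
  proof
    obtain N where N: "N \<lhd> G" "closedin T N" "finite (carrier (G Mod N))" "F \<subseteq> Jset G Gs \<mu> N"
      using find_N[OF fF] unfolding F_def by blast
    have "{\<alpha>\<in>Jset G Gs \<mu> N. series_factor G Gs \<alpha> \<cong> S} = F" using sub_F N(4) unfolding F_def by blast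
    then show "card F \<in> finite_quotient_counts G T S" using counts_N(2)[OF N(1-3), where S=S] by simp
    show "\<forall>k\<in>finite_quotient_counts G T S. k \<le> card F"
    proof
      fix k assume "k \<in> finite_quotient_counts G T S"
      then obtain N' where "k = card {\<alpha>\<in>Jset G Gs \<mu> N'. series_factor G Gs \<alpha> \<cong> S}" using counts_le by blast
      then show "k \<le> card F" using card_mono[OF fF sub_F] by simp
    qed
  qed
  show ?thesis unfolding F_def[symmetric]
  proof
    assume "finite F \<and> card F = n"
    then show "n \<in> finite_quotient_counts G T S \<and> (\<forall>k\<in>finite_quotient_counts G T S. k \<le> n)"
      using fin_case by blast
  next
    assume R: "n \<in> finite_quotient_counts G T S \<and> (\<forall>k\<in>finite_quotient_counts G T S. k \<le> n)"
    have fF: "finite F"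
    proof (rule ccontr)
      assume "infinite F"
      then obtain F0 where F0: "F0 \<subseteq> F" "finite F0" "card F0 = Suc n"
        using infinite_arbitrarily_large by blast
      obtain N where N: "N \<lhd> G" "closedin T N" "finite (carrier (G Mod N))" "F0 \<subseteq> Jset G Gs \<mu> N"
        using find_N[OF F0(2)] F0(1) unfolding F_def by blast
      have fJ: "finite {\<alpha>\<in>Jset G Gs \<mu> N. series_factor G Gs \<alpha> \<cong> S}" using counts_N(1)[OF N(1-3)] by simp
      have "F0 \<subseteq> {\<alpha>\<in>Jset G Gs \<mu> N. series_factor G Gs \<alpha> \<cong> S}" using F0(1) N(4) unfolding F_def by blast
      then have "card F0 \<le> card {\<alpha>\<in>Jset G Gs \<mu> N. series_factor G Gs \<alpha> \<cong> S}" by (rule card_mono[OF fJ])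
      then have "Suc n \<le> card {\<alpha>\<in>Jset G Gs \<mu> N. series_factor G Gs \<alpha> \<cong> S}" using F0(3) by simp
      moreover have "card {\<alpha>\<in>Jset G Gs \<mu> N. series_factor G Gs \<alpha> \<cong> S} \<le> n"
        using R counts_N(2)[OF N(1-3), where S=S] by blast
      ultimately show False by simp
    qed
    then have "card F \<le> n" "n \<le> card F" using fin_case R by auto
    then show "finite F \<and> card F = n" using fF by simp
  qed
qed

end

theorem lemma1p7:
  fixes G :: "'a monoid" and T :: "'a topology"
    and Gs :: "'i::wellorder \<Rightarrow> 'a set" and \<mu> :: 'i
    and S :: "'s monoid" and n :: nat
  assumes "profinite_group G T"
    and "composition_series G T Gs \<mu>"
    and "finite (carrier S)" and "simple_group S"
  shows "(finite {\<alpha>. \<alpha> < \<mu> \<and> series_factor G Gs \<alpha> \<cong> S} \<and>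
          card {\<alpha>. \<alpha> < \<mu> \<and> series_factor G Gs \<alpha> \<cong> S} = n)
     \<longleftrightarrow> (n \<in> finite_quotient_counts G T S \<and> (\<forall>k\<in>finite_quotient_counts G T S. k \<le> n))"
proof -
  interpret cser G T Gs \<mu>
    by (intro cser.intro profin.intro cser_axioms.intro assms(1,2))
  show ?thesis by (rule main)
qed

end
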